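(* Let $\delta\in(0,1)$ and $\iota=\log(2|\mathcal{G}||\mathcal{T}||\Pi|/\delta)$. Let $\hat\pi\in\arg\max_{\pi\in\Pi}\max_{T\in\mathcal{T}}\mathrm{lb}(T,\pi)$ be the policy returned by the algorithm, and let $\hat T\in\arg\max_{T\in\mathcal{T}}\mathrm{lb}(T,\hat\pi)$. Then, with probability at least $1-\delta$ over the draw of the dataset $\mathcal{D}$, $$\eta(T^\star,\hat\pi)\ge \sup_{\pi\in\Pi}\Big\{\eta(T^\star,\pi)-\frac{6V_{\max}\epsilon_\rho(\pi)}{(1-\gamma)^2}-\frac{V_{\max}\epsilon_\mu(\pi)}{1-\gamma}\Big\}-\frac{\epsilon_V(\hat T,\hat\pi)}{1-\gamma}-\frac{4V_{\max}}{1-\gamma}\sqrt{\frac{\zeta\iota}{n}}-\frac{2\zeta V_{\max}\mathrm{TV}(\hat\mu,\mu)}{1-\gamma}.$$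
   Context: Setting: a discounted MDP with state space $\mathcal{S}$ and action space $\mathcal{A}$ (discrete, so distributions are probability mass functions), unknown true transition kernel $T^\star:\mathcal{S}\times\mathcal{A}\to\Delta(\mathcal{S})$, known reward $r:\mathcal{S}\times\mathcal{A}\to\mathbb{R}_{\ge 0}$ and discount $\gamma\in[0,1)$. For a transition kernel $T$ and a policy $\pi:\mathcal{S}\to\Delta(\mathcal{A})$, $V^\pi_T(s)=\mathbb{E}[\sum_{t\ge0}\gamma^t r(s_t,a_t)\mid s_0=s,\,a_t\sim\pi(s_t),\,s_{t+1}\sim T(s_t,a_t)]$. $R_{\max}=\max_{s,a}r(s,a)$, $V_{\max}=R_{\max}/(1-\gamma)$. The initial state is a fixed $s_0$, and $\eta(T,\pi)=V^\pi_T(s_0)$. The normalized discounted occupancy is $\rho^\pi_T(s,a)=(1-\gamma)\sum_{t\ge0}\gamma^t\Pr^\pi_T(s_t=s,a_t=a\mid s_0)$. The dataset $\mathcal{D}=\{(s_i,a_i,s_i')\}_{i=1}^n$ consists of $n$ i.i.d. samples from a distribution $\mu$ on $\mathcal{S}\times\mathcal{A}\times\mathcal{S}$ whose conditional law of $s'$ given $(s,a)$ is $T^\star(s,a)$; $\mu(s,a)$ also denotes its $(s,a)$-marginal. $\hat\mu$ is a given distribution on $\mathcal{S}\times\mathcal{A}$ (an estimate of $\mu$), and $\mathrm{TV}(p,q)=\sum_x|p(x)-q(x)|$ (this $\ell_1$ convention is used for all TV distances). There are finite classes $\mathcal{G}$ of functions $g:\mathcal{S}\to[0,V_{\max}]$,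 $\mathcal{T}$ of transition kernels (possibly $T^\star\notin\mathcal{T}$) and $\Pi$ of policies. A cutoff $\zeta>0$ is fixed. Truncated density ratio: $w_{\pi,T}(s,a)=\mathbf{1}\{\rho^\pi_T(s,a)/\hat\mu(s,a)\le\zeta\}\,\rho^\pi_T(s,a)/\hat\mu(s,a)$ (the ratio is $+\infty$ when $\hat\mu(s,a)=0<\rho^\pi_T(s,a)$). For $g\in\mathcal{G}$, $f^g_T(s,a)=\mathbb{E}_{s'\sim T(s,a)}[g(s')]$. Empirical loss: $\ell_w(g,T)=\big|\frac1n\sum_{i=1}^n w(s_i,a_i)\big(f^g_T(s_i,a_i)-g(s_i')\big)\big|$. Lower bound: $\mathrm{lb}(T,\pi)=\eta(T,\pi)-\frac{1}{1-\gamma}\Big(\sup_{g\in\mathcal{G}}\ell_{w_{\pi,T}}(g,T)+V_{\max}\mathbb{E}_{(s,a)\sim\rho^\pi_T}\big[\mathbf{1}\{\rho^\pi_T(s,a)/\hat\mu(s,a)>\zeta\}\big]\Big)$. Error terms: $\epsilon_V(T,\pi)=\inf_{g\in\mathcal{G}}\big|\mathbb{E}_{(s,a)\sim\mu}\big[w_{\pi,T}(s,a)\big(\mathbb{E}_{s'\sim T(s,a)}[(g-V^\pi_{T^\star})(s')]-\mathbb{E}_{s'\sim T^\star(s,a)}[(g-V^\pi_{T^\star})(s')]\big)\big]\big|$; $\epsilon_\rho(\pi)=\inf_{T\in\mathcal{T}}\mathbb{E}_{(s,a)\sim\rho^\pi_{T^\star}}[\mathrm{TV}(T(s,a),T^\star(s,a))]$;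 $\epsilon_\mu(\pi)=\mathbb{E}_{(s,a)\sim\rho^\pi_{T^\star}}\big[\mathbf{1}\{\rho^\pi_{T^\star}(s,a)/\hat\mu(s,a)>\zeta/2\}\big]$. *)

theory Defs
  imports "HOL-Probability.Probability"
begin

type_synonym ('s,'a) kernel = "'s \<Rightarrow> 'a \<Rightarrow> 's pmf"
type_synonym ('s,'a) policy = "'s \<Rightarrow> 'a pmf"

primrec sa_dist :: "('s,'a) kernel \<Rightarrow> ('s,'a) policy \<Rightarrow> 's \<Rightarrow> nat \<Rightarrow> ('s \<times> 'a) pmf" where
  "sa_dist T \<pi> s 0 = map_pmf (\<lambda>a. (s, a)) (\<pi> s)"
| "sa_dist T \<pi> s (Suc t) =
     bind_pmf (sa_dist T \<pi> s t)
       (\<lambda>(x, a). bind_pmf (T x a) (\<lambda>x'. map_pmf (\<lambda>a'. (x', a')) (\<pi> x')))"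

definition Vfun :: "('s \<Rightarrow> 'a \<Rightarrow> real) \<Rightarrow> real \<Rightarrow> ('s,'a) kernel \<Rightarrow> ('s,'a) policy \<Rightarrow> 's \<Rightarrow> real" where
  "Vfun r \<gamma> T \<pi> s = (\<Sum>t. \<gamma> ^ t * measure_pmf.expectation (sa_dist T \<pi> s t) (\<lambda>(x, a). r x a))"

definition eta :: "('s \<Rightarrow> 'a \<Rightarrow> real) \<Rightarrow> real \<Rightarrow> 's \<Rightarrow> ('s,'a) kernel \<Rightarrow> ('s,'a) policy \<Rightarrow> real" where
  "eta r \<gamma> s0 T \<pi> = Vfun r \<gamma> T \<pi> s0"

definition Rmax :: "('s \<Rightarrow> 'a \<Rightarrow> real) \<Rightarrow> real" where
  "Rmax r = (SUP x. case_prod r x)"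

definition Vmax :: "('s \<Rightarrow> 'a \<Rightarrow> real) \<Rightarrow> real \<Rightarrow> real" where
  "Vmax r \<gamma> = Rmax r / (1 - \<gamma>)"

definition occ :: "real \<Rightarrow> 's \<Rightarrow> ('s,'a) kernel \<Rightarrow> ('s,'a) policy \<Rightarrow> 's \<times> 'a \<Rightarrow> real" where
  "occ \<gamma> s0 T \<pi> x = (1 - \<gamma>) * (\<Sum>t. \<gamma> ^ t * pmf (sa_dist T \<pi> s0 t) x)"

definition occ_exp :: "('x \<Rightarrow> real) \<Rightarrow> ('x \<Rightarrow> real) \<Rightarrow> real" where
  "occ_exp \<rho> f = infsum (\<lambda>x. \<rho> x * f x) UNIV"

text \<open>TV distance, l1 convention.\<close>
definition TV :: "'x pmf \<Rightarrow> 'x pmf \<Rightarrow> real" where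
  "TV p q = infsum (\<lambda>x. \<bar>pmf p x - pmf q x\<bar>) UNIV"

text \<open>Event rho(x)/muhat(x) > c, with the ratio = +infinity when muhat(x) = 0 < rho(x)
  (and not exceeding when both vanish).\<close>
definition ratio_exceeds :: "real \<Rightarrow> ('x \<Rightarrow> real) \<Rightarrow> 'x pmf \<Rightarrow> 'x \<Rightarrow> bool" where
  "ratio_exceeds c \<rho> \<mu>h x =
     (if pmf \<mu>h x = 0 then \<rho> x > 0 else \<rho> x / pmf \<mu>h x > c)"

definition wtr :: "real \<Rightarrow> ('x \<Rightarrow> real) \<Rightarrow> 'x pmf \<Rightarrow> 'x \<Rightarrow> real" where
  "wtr \<zeta> \<rho> \<mu>h x =
     (if ratio_exceeds \<zeta> \<rho> \<mu>h x \<or> pmf \<mu>h x = 0 then 0 else \<rho> x / pmf \<mu>h x)"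

definition w_pol :: "real \<Rightarrow> 's \<Rightarrow> real \<Rightarrow> ('s \<times> 'a) pmf \<Rightarrow> ('s,'a) policy \<Rightarrow> ('s,'a) kernel
    \<Rightarrow> 's \<times> 'a \<Rightarrow> real" where
  "w_pol \<gamma> s0 \<zeta> \<mu>h \<pi> T = wtr \<zeta> (occ \<gamma> s0 T \<pi>) \<mu>h"

definition fT :: "('s,'a) kernel \<Rightarrow> ('s \<Rightarrow> real) \<Rightarrow> 's \<Rightarrow> 'a \<Rightarrow> real" where
  "fT T g s a = measure_pmf.expectation (T s a) g"

definition emp_loss :: "('s \<times> 'a \<Rightarrow> real) \<Rightarrow> ('s \<times> 'a \<times> 's) list \<Rightarrow> ('s \<Rightarrow> real)
    \<Rightarrow> ('s,'a) kernel \<Rightarrow> real" where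
  "emp_loss w D g T =
     \<bar>(1 / real (length D)) * (\<Sum>(s, a, s') \<leftarrow> D. w (s, a) * (fT T g s a - g s'))\<bar>"

definition lb :: "('s \<Rightarrow> 'a \<Rightarrow> real) \<Rightarrow> real \<Rightarrow> 's \<Rightarrow> real \<Rightarrow> ('s \<times> 'a) pmf
    \<Rightarrow> ('s \<Rightarrow> real) set \<Rightarrow> ('s \<times> 'a \<times> 's) list \<Rightarrow> ('s,'a) kernel \<Rightarrow> ('s,'a) policy \<Rightarrow> real" where
  "lb r \<gamma> s0 \<zeta> \<mu>h G D T \<pi> =
     eta r \<gamma> s0 T \<pi> - (1 / (1 - \<gamma>)) *
       ((SUP g\<in>G. emp_loss (w_pol \<gamma> s0 \<zeta> \<mu>h \<pi> T) D g T)
        + Vmax r \<gamma> * occ_exp (occ \<gamma> s0 T \<pi>)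
             (\<lambda>x. if ratio_exceeds \<zeta> (occ \<gamma> s0 T \<pi>) \<mu>h x then 1 else 0))"

definition sa_marg :: "('s \<times> 'a \<times> 's) pmf \<Rightarrow> ('s \<times> 'a) pmf" where
  "sa_marg \<mu> = map_pmf (\<lambda>(s, a, s'). (s, a)) \<mu>"

definition eps_V :: "('s \<Rightarrow> 'a \<Rightarrow> real) \<Rightarrow> real \<Rightarrow> 's \<Rightarrow> real \<Rightarrow> ('s \<times> 'a) pmf
    \<Rightarrow> ('s \<times> 'a \<times> 's) pmf \<Rightarrow> ('s,'a) kernel \<Rightarrow> ('s \<Rightarrow> real) set
    \<Rightarrow> ('s,'a) kernel \<Rightarrow> ('s,'a) policy \<Rightarrow> real" where
  "eps_V r \<gamma> s0 \<zeta> \<mu>h \<mu> Tstar G T \<pi> =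
     (INF g\<in>G. \<bar>measure_pmf.expectation (sa_marg \<mu>)
        (\<lambda>(s, a). w_pol \<gamma> s0 \<zeta> \<mu>h \<pi> T (s, a) *
           (measure_pmf.expectation (T s a) (\<lambda>s'. g s' - Vfun r \<gamma> Tstar \<pi> s')
            - measure_pmf.expectation (Tstar s a) (\<lambda>s'. g s' - Vfun r \<gamma> Tstar \<pi> s')))\<bar>)"

definition eps_rho :: "real \<Rightarrow> 's \<Rightarrow> ('s,'a) kernel \<Rightarrow> ('s,'a) kernel set \<Rightarrow> ('s,'a) policy \<Rightarrow> real" where
  "eps_rho \<gamma> s0 Tstar TT \<pi> =
     (INF T\<in>TT. occ_exp (occ \<gamma> s0 Tstar \<pi>) (\<lambda>(s, a). TV (T s a) (Tstar s a)))"

definition eps_mu :: "real \<Rightarrow> 's \<Rightarrow> real \<Rightarrow> ('s \<times> 'a) pmf \<Rightarrow> ('s,'a) kernel \<Rightarrow> ('s,'a) policy \<Rightarrow> real" where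
  "eps_mu \<gamma> s0 \<zeta> \<mu>h Tstar \<pi> =
     occ_exp (occ \<gamma> s0 Tstar \<pi>)
       (\<lambda>x. if ratio_exceeds (\<zeta> / 2) (occ \<gamma> s0 Tstar \<pi>) \<mu>h x then 1 else 0)"

primrec iid :: "nat \<Rightarrow> 'x pmf \<Rightarrow> 'x list pmf" where
  "iid 0 p = return_pmf []"
| "iid (Suc n) p = bind_pmf p (\<lambda>x. map_pmf (\<lambda>xs. x # xs) (iid n p))"

end

theory Submission
  imports Defs
begin

lemma pmf_summable_on: "pmf p summable_on A"
proof -
  have "Infinite_Set_Sum.abs_summable_on (pmf p) A" by (rule pmf_abs_summable)
  hence "Infinite_Sum.abs_summable_on (pmf p) A" using abs_summable_equivalent by blast
  thus ?thesis using summable_on_iff_abs_summable_on_real by blast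
qed
lemma pmf_mult_summable_on:
  fixes f :: "'a \<Rightarrow> real"
  assumes "\<And>x. \<bar>f x\<bar> \<le> B"
  shows "(\<lambda>x. pmf p x * f x) summable_on A"
proof -
  have 1: "(\<lambda>x. pmf p x * B) summable_on A"
    by (rule summable_on_cmult_left[OF pmf_summable_on])
  have 2: "(\<lambda>x. norm (pmf p x * f x)) summable_on A"
  proof (rule summable_on_comparison_test[OF 1])
    fix x
    have "\<bar>pmf p x * f x\<bar> = pmf p x * \<bar>f x\<bar>" by (simp add: abs_mult)
    also have "\<dots> \<le> pmf p x * B" by (rule mult_left_mono[OF assms]) simp
    finally show "norm (pmf p x * f x) \<le> pmf p x * B" by simp
  qed simp
  show ?thesis by (rule summable_on_iff_abs_summable_on_real[THEN iffD2, OF 2])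
qed

lemma exp_infsum:
  fixes f :: "'a \<Rightarrow> real"
  assumes "\<And>x. \<bar>f x\<bar> \<le> B"
  shows "measure_pmf.expectation p f = (\<Sum>\<^sub>\<infinity>x. pmf p x * f x)"
proof -
  have s: "(\<lambda>x. pmf p x * f x) summable_on UNIV" by (rule pmf_mult_summable_on[OF assms])
  hence "Infinite_Sum.abs_summable_on (\<lambda>x. pmf p x * f x) UNIV"
    by (rule summable_on_iff_abs_summable_on_real[THEN iffD1])
  hence "Infinite_Set_Sum.abs_summable_on (\<lambda>x. pmf p x * f x) UNIV" by (rule abs_summable_equivalent[THEN iffD1])
  thus ?thesis by (simp add: pmf_expectation_eq_infsetsum infsetsum_infsum)
qed

lemma infsum_pmf_1: "(\<Sum>\<^sub>\<infinity>x. pmf p x) = 1"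
  using exp_infsum[of "\<lambda>_. 1" 1 p] by simp

lemma exp_bind_pmf:
  fixes f :: "'b \<Rightarrow> real"
  assumes "\<And>y. \<bar>f y\<bar> \<le> B"
  shows "measure_pmf.expectation (bind_pmf M N) f
       = measure_pmf.expectation M (\<lambda>x. measure_pmf.expectation (N x) f)"
  unfolding measure_pmf_bind
  apply (rule integral_bind[where K="count_space UNIV" and B=B and B'=1])
  using assms measurable_measure_pmf[of N] 
  by (auto simp: measure_pmf.emeasure_space_1 intro!: measure_pmf.finite_measure)

lemma exp_bounded:
  fixes f :: "'a \<Rightarrow> real"
  assumes "\<And>x. \<bar>f x\<bar> \<le> B"
  shows "\<bar>measure_pmf.expectation p f\<bar> \<le> B"
proof -
  have "\<bar>measure_pmf.expectation p f\<bar> \<le> measure_pmf.expectation p (\<lambda>x. \<bar>f x\<bar>)"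
    by (rule integral_abs_bound)
  also have "\<dots> \<le> measure_pmf.expectation p (\<lambda>x. B)"
    apply (rule integral_mono)
    using assms by (auto intro!: measure_pmf.integrable_const_bound[where B=B])
  finally show ?thesis by simp
qed

lemma integrable_bdd:
  fixes f :: "'a \<Rightarrow> real"
  assumes "\<And>x. \<bar>f x\<bar> \<le> B"
  shows "integrable (measure_pmf p) f"
  using assms by (auto intro!: measure_pmf.integrable_const_bound[where B=B])

lemma exp_mono_bdd:
  fixes f g :: "'a \<Rightarrow> real"
  assumes "\<And>x. \<bar>f x\<bar> \<le> B" "\<And>x. \<bar>g x\<bar> \<le> B'" "\<And>x. f x \<le> g x"
  shows "measure_pmf.expectation p f \<le> measure_pmf.expectation p g"
  by (rule integral_mono) (use assms integrable_bdd[of f B] integrable_bdd[of g B'] in auto)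

lemma exp_lb:
  fixes f :: "'a \<Rightarrow> real"
  assumes "\<And>x. c \<le> f x"  "\<And>x. \<bar>f x\<bar> \<le> B"
  shows "c \<le> measure_pmf.expectation p f"
proof -
  have "measure_pmf.expectation p (\<lambda>x. c) \<le> measure_pmf.expectation p f"
    by (rule exp_mono_bdd[where B="\<bar>c\<bar>" and B'=B]) (use assms in auto)
  thus ?thesis by simp
qed

lemma exp_ub:
  fixes f :: "'a \<Rightarrow> real"
  assumes "\<And>x. f x \<le> c"  "\<And>x. \<bar>f x\<bar> \<le> B"
  shows "measure_pmf.expectation p f \<le> c"
proof -
  have "measure_pmf.expectation p f \<le> measure_pmf.expectation p (\<lambda>x. c)"
    by (rule exp_mono_bdd[where B=B and B'="\<bar>c\<bar>"]) (use assms in auto)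
  thus ?thesis by simp
qed

lemma sa_dist_Suc':
  "sa_dist T \<pi> s (Suc t) = bind_pmf (\<pi> s) (\<lambda>a. bind_pmf (T s a) (\<lambda>s'. sa_dist T \<pi> s' t))"
proof (induction t)
  case 0
  show ?case by (simp add: bind_map_pmf)
next
  case (Suc t)
  have "sa_dist T \<pi> s (Suc (Suc t)) = bind_pmf (sa_dist T \<pi> s (Suc t))
       (\<lambda>(x, a). bind_pmf (T x a) (\<lambda>x'. map_pmf (\<lambda>a'. (x', a')) (\<pi> x')))" by simp
  also have "\<dots> = bind_pmf (\<pi> s) (\<lambda>a. bind_pmf (T s a) (\<lambda>s'. sa_dist T \<pi> s' (Suc t)))"
    unfolding Suc by (simp add: bind_assoc_pmf)
  finally show ?case .
qed

lemma exp_suminf: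
  fixes F :: "nat \<Rightarrow> 'a \<Rightarrow> real"
  assumes "0 \<le> \<gamma>" "\<gamma> < 1" "\<And>t x. \<bar>F t x\<bar> \<le> B"
  shows "measure_pmf.expectation p (\<lambda>x. \<Sum>t. \<gamma>^t * F t x)
       = (\<Sum>t. \<gamma>^t * measure_pmf.expectation p (F t))"
proof -
  have B: "0 \<le> B" using assms(3)[of 0 undefined] by linarith
  have sg: "summable (\<lambda>t. \<gamma>^t * B)"
    using assms by (intro summable_mult2 summable_geometric) auto
  have bd: "\<bar>\<gamma>^t * F t x\<bar> \<le> \<gamma>^t * B" for t x
    using assms by (auto simp: abs_mult intro!: mult_left_mono)
  have int: "integrable (measure_pmf p) (\<lambda>x. \<gamma>^t * F t x)" for t
    by (rule integrable_bdd[OF bd])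
  have "(\<integral>x. (\<Sum>t. \<gamma>^t * F t x) \<partial>p) = (\<Sum>t. integral\<^sup>L p (\<lambda>x. \<gamma>^t * F t x))"
  proof (rule integral_suminf)
    show "integrable (measure_pmf p) (\<lambda>x. \<gamma>^t * F t x)" for t by (rule int)
    show "AE x in measure_pmf p. summable (\<lambda>t. norm (\<gamma>^t * F t x))"
      by (intro AE_I2 summable_comparison_test'[OF sg]) (use bd in auto)
    show "summable (\<lambda>t. \<integral>x. norm (\<gamma>^t * F t x) \<partial>p)"
    proof (rule summable_comparison_test'[OF sg])
      fix t
      have "\<bar>\<integral>x. norm (\<gamma>^t * F t x) \<partial>p\<bar> \<le> \<gamma>^t * B"
        by (rule exp_bounded) (use bd in auto)
      thus "norm (\<integral>x. norm (\<gamma>^t * F t x) \<partial>p) \<le> \<gamma>^t * B" by simp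
    qed
  qed
  thus ?thesis by simp
qed

locale mdp =
  fixes r :: "'s \<Rightarrow> 'a \<Rightarrow> real" and \<gamma> :: real
  assumes g0: "0 \<le> \<gamma>" and g1: "\<gamma> < 1" and rnn: "\<forall>s a. 0 \<le> r s a"
    and rbdd: "bdd_above (range (case_prod r))"
begin

lemma r_le: "r s a \<le> Rmax r"
proof -
  have "case_prod r (s, a) \<le> (SUP x. case_prod r x)"
    by (rule cSUP_upper) (use rbdd in auto)
  thus ?thesis by (simp add: Rmax_def)
qed

lemma Rm_nn: "0 \<le> Rmax r"
  using r_le[of undefined undefined] rnn by (meson order.trans)

lemma Vm_nn: "0 \<le> Vmax r \<gamma>"
  using Rm_nn g1 by (simp add: Vmax_def)

lemma Vm_eq: "Vmax r \<gamma> = Rmax r / (1 - \<gamma>)" by (simp add: Vmax_def)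

lemma R_abs: "\<bar>case_prod r x\<bar> \<le> Rmax r"
  using r_le rnn by (cases x) auto

definition ER :: "('s,'a) kernel \<Rightarrow> ('s,'a) policy \<Rightarrow> nat \<Rightarrow> 's \<Rightarrow> real" where
  "ER T \<pi> t s = measure_pmf.expectation (sa_dist T \<pi> s t) (\<lambda>(x, a). r x a)"

lemma ER_bd: "\<bar>ER T \<pi> t s\<bar> \<le> Rmax r"
  unfolding ER_def by (rule exp_bounded[OF R_abs])

lemma ER_nn: "0 \<le> ER T \<pi> t s"
  unfolding ER_def by (rule integral_nonneg_AE) (use rnn in auto)

lemma V_alt: "Vfun r \<gamma> T \<pi> s = (\<Sum>t. \<gamma>^t * ER T \<pi> t s)"
  by (simp add: Vfun_def ER_def)

lemma summ_geo: "summable (\<lambda>t. \<gamma>^t * B)"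
  using g0 g1 by (intro summable_mult2 summable_geometric) auto

lemma summable_V: "summable (\<lambda>t. \<gamma>^t * ER T \<pi> t s)"
  by (rule summable_comparison_test'[OF summ_geo[of "Rmax r"]])
     (use ER_bd g0 in \<open>auto simp: abs_mult intro!: mult_left_mono\<close>)

lemma V_nn: "0 \<le> Vfun r \<gamma> T \<pi> s"
  unfolding V_alt by (rule suminf_nonneg[OF summable_V]) (use g0 ER_nn in auto)

lemma V_le: "Vfun r \<gamma> T \<pi> s \<le> Vmax r \<gamma>"
proof -
  have "(\<Sum>t. \<gamma>^t * ER T \<pi> t s) \<le> (\<Sum>t. \<gamma>^t * Rmax r)"
    by (rule suminf_le[OF _ summable_V summ_geo])
       (use ER_bd g0 in \<open>auto intro!: mult_left_mono simp: abs_le_iff\<close>)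
  also have "\<dots> = Rmax r / (1 - \<gamma>)"
    using g0 g1 by (simp add: suminf_mult2[symmetric, OF summable_geometric] suminf_geometric)
  finally show ?thesis by (simp add: V_alt Vm_eq)
qed

lemma V_abs: "\<bar>Vfun r \<gamma> T \<pi> s\<bar> \<le> Vmax r \<gamma>"
  using V_nn V_le by auto

lemma bellman:
  "Vfun r \<gamma> T \<pi> s = measure_pmf.expectation (\<pi> s)
      (\<lambda>a. r s a + \<gamma> * measure_pmf.expectation (T s a) (Vfun r \<gamma> T \<pi>))"
proof -
  let ?f = "\<lambda>t. \<gamma>^t * ER T \<pi> t s"
  have "Vfun r \<gamma> T \<pi> s = ?f 0 + (\<Sum>t. ?f (Suc t))"
    unfolding V_alt using suminf_split_head[OF summable_V] by simp
  also have "?f 0 = measure_pmf.expectation (\<pi> s) (\<lambda>a. r s a)"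
    by (simp add: ER_def)
  also have "(\<Sum>t. ?f (Suc t)) = \<gamma> * (\<Sum>t. \<gamma>^t * measure_pmf.expectation (\<pi> s)
          (\<lambda>a. measure_pmf.expectation (T s a) (ER T \<pi> t)))"
  proof -
    have e: "ER T \<pi> (Suc t) s = measure_pmf.expectation (\<pi> s)
          (\<lambda>a. measure_pmf.expectation (T s a) (ER T \<pi> t))" for t
    proof -
      have "ER T \<pi> (Suc t) s = measure_pmf.expectation (\<pi> s)
          (\<lambda>a. measure_pmf.expectation (bind_pmf (T s a) (\<lambda>s'. sa_dist T \<pi> s' t)) (\<lambda>(x, a). r x a))"
        unfolding ER_def sa_dist_Suc' by (rule exp_bind_pmf[OF R_abs])
      also have "\<dots> = measure_pmf.expectation (\<pi> s)
          (\<lambda>a. measure_pmf.expectation (T s a) (ER T \<pi> t))"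
        unfolding ER_def by (subst exp_bind_pmf[OF R_abs]) simp
      finally show ?thesis .
    qed
    have "(\<Sum>t. ?f (Suc t)) = (\<Sum>t. \<gamma> * (\<gamma>^t * measure_pmf.expectation (\<pi> s)
          (\<lambda>a. measure_pmf.expectation (T s a) (ER T \<pi> t))))"
      by (simp add: e mult.assoc)
    also have "\<dots> = \<gamma> * (\<Sum>t. \<gamma>^t * measure_pmf.expectation (\<pi> s)
          (\<lambda>a. measure_pmf.expectation (T s a) (ER T \<pi> t)))"
    proof (rule suminf_mult)
      show "summable (\<lambda>t. \<gamma>^t * measure_pmf.expectation (\<pi> s)
          (\<lambda>a. measure_pmf.expectation (T s a) (ER T \<pi> t)))"
        apply (rule summable_comparison_test'[OF summ_geo[of "Rmax r"]])
        using g0 by (auto simp: abs_mult intro!: mult_left_mono exp_bounded ER_bd)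
    qed
    finally show ?thesis .
  qed
  also have "(\<Sum>t. \<gamma>^t * measure_pmf.expectation (\<pi> s)
          (\<lambda>a. measure_pmf.expectation (T s a) (ER T \<pi> t)))
      = measure_pmf.expectation (\<pi> s) (\<lambda>a. measure_pmf.expectation (T s a) (Vfun r \<gamma> T \<pi>))"
  proof -
    have "(\<Sum>t. \<gamma>^t * measure_pmf.expectation (\<pi> s)
          (\<lambda>a. measure_pmf.expectation (T s a) (ER T \<pi> t)))
        = measure_pmf.expectation (\<pi> s) (\<lambda>a. \<Sum>t. \<gamma>^t * measure_pmf.expectation (T s a) (ER T \<pi> t))"
      by (rule exp_suminf[symmetric, OF g0 g1]) (auto intro!: exp_bounded ER_bd)
    also have "\<dots> = measure_pmf.expectation (\<pi> s) (\<lambda>a. measure_pmf.expectation (T s a) (Vfun r \<gamma> T \<pi>))"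
      unfolding V_alt
      by (subst exp_suminf[OF g0 g1]) (auto intro!: ER_bd)
    finally show ?thesis .
  qed
  also have "measure_pmf.expectation (\<pi> s) (\<lambda>a. r s a) +
      \<gamma> * measure_pmf.expectation (\<pi> s) (\<lambda>a. measure_pmf.expectation (T s a) (Vfun r \<gamma> T \<pi>))
    = measure_pmf.expectation (\<pi> s)
      (\<lambda>a. r s a + \<gamma> * measure_pmf.expectation (T s a) (Vfun r \<gamma> T \<pi>))"
  proof -
    have i1: "integrable (measure_pmf (\<pi> s)) (\<lambda>a. r s a)"
      by (rule integrable_bdd[where B="Rmax r"]) (use R_abs[of "(s, _)"] in auto)
    have i2: "integrable (measure_pmf (\<pi> s)) (\<lambda>a. \<gamma> * measure_pmf.expectation (T s a) (Vfun r \<gamma> T \<pi>))"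
      by (rule integrable_bdd[where B="\<gamma> * Vmax r \<gamma>"])
         (use g0 in \<open>auto simp: abs_mult intro!: mult_left_mono exp_bounded V_abs\<close>)
    show ?thesis using i1 i2 by simp
  qed
  finally show ?thesis .
qed

end

lemma exp_nat:
  fixes f :: "nat \<Rightarrow> real"
  assumes "\<And>t. \<bar>f t\<bar> \<le> B"
  shows "measure_pmf.expectation p f = (\<Sum>t. pmf p t * f t)"
proof -
  have s: "(\<lambda>t. pmf p t * f t) summable_on UNIV" by (rule pmf_mult_summable_on[OF assms])
  have "(\<lambda>t. pmf p t * f t) sums (\<Sum>\<^sub>\<infinity>t. pmf p t * f t)"
    by (rule has_sum_imp_sums[OF has_sum_infsum[OF s]])
  hence "(\<Sum>\<^sub>\<infinity>t. pmf p t * f t) = (\<Sum>t. pmf p t * f t)" by (rule sums_unique)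
  thus ?thesis by (subst exp_infsum[OF assms])
qed

lemma occ_exp_pmf:
  fixes f :: "'a \<Rightarrow> real"
  assumes "\<And>x. \<bar>f x\<bar> \<le> B"
  shows "occ_exp (pmf P) f = measure_pmf.expectation P f"
  by (simp add: occ_exp_def exp_infsum[OF assms])

context mdp begin

definition rhoP :: "'s \<Rightarrow> ('s,'a) kernel \<Rightarrow> ('s,'a) policy \<Rightarrow> ('s \<times> 'a) pmf" where
  "rhoP s0 T \<pi> = bind_pmf (geometric_pmf (1 - \<gamma>)) (\<lambda>t. sa_dist T \<pi> s0 t)"

lemma pmf_geo: "pmf (geometric_pmf (1 - \<gamma>)) t = \<gamma>^t * (1 - \<gamma>)"
  using g0 g1 by simp

lemma exp_geo:
  fixes f :: "nat \<Rightarrow> real"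
  assumes "\<And>t. \<bar>f t\<bar> \<le> B"
  shows "measure_pmf.expectation (geometric_pmf (1 - \<gamma>)) f = (1 - \<gamma>) * (\<Sum>t. \<gamma>^t * f t)"
proof -
  have sm: "summable (\<lambda>t. \<gamma>^t * f t)"
    by (rule summable_comparison_test'[OF summ_geo[of B]])
       (use assms g0 in \<open>auto simp: abs_mult intro!: mult_left_mono\<close>)
  have "measure_pmf.expectation (geometric_pmf (1 - \<gamma>)) f = (\<Sum>t. (1 - \<gamma>) * (\<gamma>^t * f t))"
    by (subst exp_nat[OF assms]) (simp add: pmf_geo mult_ac)
  also have "\<dots> = (1 - \<gamma>) * (\<Sum>t. \<gamma>^t * f t)" by (rule suminf_mult[OF sm])
  finally show ?thesis .
qed

lemma occ_eq: "occ \<gamma> s0 T \<pi> = pmf (rhoP s0 T \<pi>)"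
proof
  fix x
  have "pmf (rhoP s0 T \<pi>) x = measure_pmf.expectation (geometric_pmf (1 - \<gamma>)) (\<lambda>t. pmf (sa_dist T \<pi> s0 t) x)"
    by (simp add: rhoP_def pmf_bind)
  also have "\<dots> = (1 - \<gamma>) * (\<Sum>t. \<gamma>^t * pmf (sa_dist T \<pi> s0 t) x)"
    by (rule exp_geo[where B=1]) (simp add: pmf_le_1)
  finally show "occ \<gamma> s0 T \<pi> x = pmf (rhoP s0 T \<pi>) x" by (simp add: occ_def)
qed

lemma occ_exp_rho:
  fixes f :: "'s \<times> 'a \<Rightarrow> real"
  assumes "\<And>x. \<bar>f x\<bar> \<le> B"
  shows "occ_exp (occ \<gamma> s0 T \<pi>) f = measure_pmf.expectation (rhoP s0 T \<pi>) f"
  unfolding occ_eq by (rule occ_exp_pmf[OF assms])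

lemma exp_rho:
  fixes f :: "'s \<times> 'a \<Rightarrow> real"
  assumes "\<And>x. \<bar>f x\<bar> \<le> B"
  shows "measure_pmf.expectation (rhoP s0 T \<pi>) f
       = (1 - \<gamma>) * (\<Sum>t. \<gamma>^t * measure_pmf.expectation (sa_dist T \<pi> s0 t) f)"
  unfolding rhoP_def
  by (subst exp_bind_pmf[OF assms], rule exp_geo[where B=B]) (rule exp_bounded[OF assms])

lemma rho_sum: "(\<Sum>t. \<gamma>^t * measure_pmf.expectation (sa_dist T \<pi> s0 t) f)
     = measure_pmf.expectation (rhoP s0 T \<pi>) f / (1 - \<gamma>)" if "\<And>x. \<bar>f x\<bar> \<le> B" for f :: "'s \<times> 'a \<Rightarrow> real" and B
  using exp_rho[OF that, of s0 T \<pi>] g1 by simp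

lemma PV_abs: "\<bar>measure_pmf.expectation (T x a) (Vfun r \<gamma> T' \<pi>)\<bar> \<le> Vmax r \<gamma>"
  by (rule exp_bounded[OF V_abs])

lemma simulation:
  "eta r \<gamma> s0 T \<pi> - eta r \<gamma> s0 T' \<pi> = \<gamma> / (1 - \<gamma>) *
     measure_pmf.expectation (rhoP s0 T \<pi>)
       (\<lambda>(x, a). measure_pmf.expectation (T x a) (Vfun r \<gamma> T' \<pi>)
               - measure_pmf.expectation (T' x a) (Vfun r \<gamma> T' \<pi>))"
proof -
  let ?V = "Vfun r \<gamma> T' \<pi>"
  define Q where "Q = (\<lambda>(x, a). r x a + \<gamma> * measure_pmf.expectation (T' x a) ?V)"
  define P where "P = (\<lambda>(x::'s, a::'a). measure_pmf.expectation (T x a) ?V)"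
  define P' where "P' = (\<lambda>(x::'s, a::'a). measure_pmf.expectation (T' x a) ?V)"
  define d where "d = (\<lambda>t. sa_dist T \<pi> s0 t)"
  define aa where "aa = (\<lambda>t. measure_pmf.expectation (d t) Q)"
  define BQ where "BQ = Rmax r + Vmax r \<gamma>"
  have Q_abs: "\<bar>Q y\<bar> \<le> BQ" for y
  proof -
    obtain x a where y: "y = (x, a)" by (cases y)
    have "\<bar>\<gamma> * measure_pmf.expectation (T' x a) ?V\<bar> \<le> 1 * Vmax r \<gamma>"
      unfolding abs_mult using g0 g1 PV_abs[of T' x a T' \<pi>]
      by (intro mult_mono) auto
    thus ?thesis using R_abs[of y] unfolding Q_def BQ_def y by auto
  qed
  have P_abs: "\<bar>P y\<bar> \<le> Vmax r \<gamma>" for y by (cases y) (simp add: P_def PV_abs)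
  have P'_abs: "\<bar>P' y\<bar> \<le> Vmax r \<gamma>" for y by (cases y) (simp add: P'_def PV_abs)
  have D_abs: "\<bar>P y - P' y\<bar> \<le> 2 * Vmax r \<gamma>" for y using P_abs[of y] P'_abs[of y] by linarith
  have aa_abs: "\<bar>aa t\<bar> \<le> BQ" for t unfolding aa_def by (rule exp_bounded[OF Q_abs])
  have aa_Suc: "aa (Suc t) = measure_pmf.expectation (d t) P" for t
  proof -
    have "aa (Suc t) = measure_pmf.expectation (d t) (\<lambda>y. measure_pmf.expectation
       ((\<lambda>(x, a). bind_pmf (T x a) (\<lambda>x'. map_pmf (\<lambda>a'. (x', a')) (\<pi> x'))) y) Q)"
      unfolding aa_def d_def by (simp only: sa_dist.simps, rule exp_bind_pmf[OF Q_abs])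
    also have "\<dots> = measure_pmf.expectation (d t) P"
    proof (rule Bochner_Integration.integral_cong[OF refl])
      fix y :: "'s \<times> 'a"
      obtain x a where y: "y = (x, a)" by (cases y)
      have "measure_pmf.expectation (bind_pmf (T x a) (\<lambda>x'. map_pmf (\<lambda>a'. (x', a')) (\<pi> x'))) Q
          = measure_pmf.expectation (T x a) (\<lambda>x'. measure_pmf.expectation (map_pmf (\<lambda>a'. (x', a')) (\<pi> x')) Q)"
        by (rule exp_bind_pmf[OF Q_abs])
      also have "\<dots> = measure_pmf.expectation (T x a) ?V"
      proof (rule Bochner_Integration.integral_cong[OF refl])
        fix x'
        have "?V x' = measure_pmf.expectation (\<pi> x')
          (\<lambda>a. r x' a + \<gamma> * measure_pmf.expectation (T' x' a) ?V)" by (rule bellman)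
        thus "measure_pmf.expectation (map_pmf (\<lambda>a'. (x', a')) (\<pi> x')) Q = ?V x'"
          by (simp add: Q_def)
      qed
      finally show "measure_pmf.expectation
       ((\<lambda>(x, a). bind_pmf (T x a) (\<lambda>x'. map_pmf (\<lambda>a'. (x', a')) (\<pi> x'))) y) Q = P y"
        by (simp add: y P_def)
    qed
    finally show ?thesis .
  qed
  have ER_eq: "ER T \<pi> t s0 = aa t - \<gamma> * aa (Suc t) + \<gamma> * measure_pmf.expectation (d t) (\<lambda>y. P y - P' y)" for t
  proof -
    have iR: "integrable (measure_pmf (d t)) (\<lambda>(x, a). r x a)" by (rule integrable_bdd[OF R_abs])
    have iP: "integrable (measure_pmf (d t)) P" by (rule integrable_bdd[OF P_abs])
    have iP': "integrable (measure_pmf (d t)) P'" by (rule integrable_bdd[OF P'_abs])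
    have Qs: "Q = (\<lambda>y. case_prod r y + \<gamma> * P' y)" by (auto simp: Q_def P'_def)
    have e1: "aa t = ER T \<pi> t s0 + \<gamma> * measure_pmf.expectation (d t) P'"
      unfolding aa_def Qs ER_def d_def using iR iP' unfolding d_def by simp
    have e2: "aa (Suc t) = measure_pmf.expectation (d t) P' + measure_pmf.expectation (d t) (\<lambda>y. P y - P' y)"
      using iP iP' by (simp add: aa_Suc)
    have e3: "\<gamma> * aa (Suc t) = \<gamma> * measure_pmf.expectation (d t) P' + \<gamma> * measure_pmf.expectation (d t) (\<lambda>y. P y - P' y)"
      unfolding e2 by (rule distrib_left)
    show ?thesis using e1 e3 by linarith
  qed
  have tel: "(\<lambda>t. \<gamma>^t * aa t - \<gamma>^Suc t * aa (Suc t)) sums (\<gamma>^0 * aa 0 - 0)"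
  proof (rule telescope_sums')
    show "(\<lambda>t. \<gamma>^t * aa t) \<longlonglongrightarrow> 0"
    proof (rule Lim_null_comparison)
      show "\<forall>\<^sub>F t in sequentially. norm (\<gamma>^t * aa t) \<le> \<gamma>^t * BQ"
        using aa_abs g0 by (intro always_eventually allI) (auto simp: abs_mult intro!: mult_left_mono)
      show "(\<lambda>t. \<gamma>^t * BQ) \<longlonglongrightarrow> 0"
        using g0 g1 by (intro tendsto_mult_left_zero LIMSEQ_power_zero) auto
    qed
  qed
  have aa0: "aa 0 = ?V s0"
  proof -
    have "?V s0 = measure_pmf.expectation (\<pi> s0)
          (\<lambda>a. r s0 a + \<gamma> * measure_pmf.expectation (T' s0 a) ?V)" by (rule bellman)
    thus ?thesis by (simp add: aa_def d_def Q_def)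
  qed
  define E where "E = (\<lambda>t. measure_pmf.expectation (d t) (\<lambda>y. P y - P' y))"
  have smE: "summable (\<lambda>t. \<gamma>^t * E t)"
    by (rule summable_comparison_test'[OF summ_geo[of "2 * Vmax r \<gamma>"]])
       (use g0 in \<open>auto simp: abs_mult E_def intro!: mult_left_mono exp_bounded D_abs\<close>)
  have "(\<lambda>t. \<gamma>^t * ER T \<pi> t s0) = (\<lambda>t. (\<gamma>^t * aa t - \<gamma>^Suc t * aa (Suc t)) + \<gamma> * (\<gamma>^t * E t))"
    by (rule ext) (simp add: ER_eq E_def algebra_simps)
  hence "(\<lambda>t. \<gamma>^t * ER T \<pi> t s0) sums (aa 0 + \<gamma> * (\<Sum>t. \<gamma>^t * E t))"
    using sums_add[OF tel sums_mult[OF summable_sums[OF smE], of \<gamma>]] by simp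
  hence "(\<Sum>t. \<gamma>^t * ER T \<pi> t s0) = aa 0 + \<gamma> * (\<Sum>t. \<gamma>^t * E t)"
    by (rule sums_unique[symmetric])
  hence "eta r \<gamma> s0 T \<pi> = ?V s0 + \<gamma> * (\<Sum>t. \<gamma>^t * E t)"
    unfolding eta_def V_alt[symmetric] aa0 .
  moreover have "(\<Sum>t. \<gamma>^t * E t) = measure_pmf.expectation (rhoP s0 T \<pi>) (\<lambda>y. P y - P' y) / (1 - \<gamma>)"
    unfolding E_def d_def by (rule rho_sum[OF D_abs])
  moreover have "(\<lambda>y. P y - P' y) = (\<lambda>(x, a). measure_pmf.expectation (T x a) ?V - measure_pmf.expectation (T' x a) ?V)"
    by (auto simp: P_def P'_def)
  ultimately show ?thesis unfolding eta_def[of r \<gamma> s0 T' \<pi>] by simp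
qed

end

lemma infsum_diff':
  fixes f g :: "'a \<Rightarrow> real"
  assumes "f summable_on A" "g summable_on A"
  shows "infsum (\<lambda>x. f x - g x) A = infsum f A - infsum g A"
proof -
  have "infsum (\<lambda>x. f x + - g x) A = infsum f A + infsum (\<lambda>x. - g x) A"
    by (rule infsum_add[OF assms(1) summable_on_uminus[THEN iffD2, OF assms(2)]])
  thus ?thesis by (simp add: infsum_uminus)
qed

lemma absdiff_le: "\<bar>pmf p x - pmf q x\<bar> \<le> pmf p x + pmf q x"
  using pmf_nonneg[of p x] pmf_nonneg[of q x] by (simp add: abs_le_iff)

lemma pmf_absdiff_summable: "(\<lambda>x. \<bar>pmf p x - pmf q x\<bar>) summable_on A"
proof (rule summable_on_comparison_test)
  show "(\<lambda>x. pmf p x + pmf q x) summable_on A"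
    by (rule summable_on_add[OF pmf_summable_on pmf_summable_on])
qed (auto simp: absdiff_le)

lemma TV_nn: "0 \<le> TV p q"
  unfolding TV_def by (rule infsum_nonneg) auto

lemma TV_sym: "TV p q = TV q p"
  unfolding TV_def by (simp add: abs_minus_commute)

lemma TV_le2: "TV p q \<le> 2"
proof -
  have "TV p q \<le> (\<Sum>\<^sub>\<infinity>x. pmf p x + pmf q x)"
    unfolding TV_def
    by (rule infsum_mono[OF pmf_absdiff_summable summable_on_add[OF pmf_summable_on pmf_summable_on]]) (rule absdiff_le)
  also have "\<dots> = 2"
    by (subst infsum_add[OF pmf_summable_on pmf_summable_on]) (simp add: infsum_pmf_1)
  finally show ?thesis .
qed

lemma TV_crude:
  fixes f :: "'a \<Rightarrow> real"
  assumes "\<And>x. \<bar>f x\<bar> \<le> B"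
  shows "\<bar>measure_pmf.expectation p f - measure_pmf.expectation q f\<bar> \<le> B * TV p q"
proof -
  have B: "0 \<le> B" using assms[of undefined] by linarith
  let ?g = "\<lambda>x. (pmf p x - pmf q x) * f x"
  have "measure_pmf.expectation p f - measure_pmf.expectation q f = infsum ?g UNIV"
    unfolding exp_infsum[OF assms] left_diff_distrib
    by (rule infsum_diff'[symmetric]) (rule pmf_mult_summable_on[OF assms])+
  moreover have gb: "\<bar>?g x\<bar> \<le> B * \<bar>pmf p x - pmf q x\<bar>" for x
  proof -
    have "\<bar>pmf p x - pmf q x\<bar> * \<bar>f x\<bar> \<le> \<bar>pmf p x - pmf q x\<bar> * B"
      by (rule mult_left_mono[OF assms]) simp
    thus ?thesis by (simp add: abs_mult mult.commute)
  qed
  have s1: "(\<lambda>x. B * \<bar>pmf p x - pmf q x\<bar>) summable_on UNIV"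
    by (rule summable_on_cmult_right[OF pmf_absdiff_summable])
  have s2: "(\<lambda>x. norm (?g x)) summable_on UNIV"
    by (rule summable_on_comparison_test[OF s1]) (use gb in auto)
  have "\<bar>infsum ?g UNIV\<bar> \<le> infsum (\<lambda>x. norm (?g x)) UNIV"
    using norm_infsum_bound[of ?g UNIV] s2 by simp
  also have "\<dots> \<le> infsum (\<lambda>x. B * \<bar>pmf p x - pmf q x\<bar>) UNIV"
    by (rule infsum_mono[OF s2 s1]) (use gb in auto)
  also have "\<dots> = B * TV p q"
    unfolding TV_def by (rule infsum_cmult_right) (use pmf_absdiff_summable in auto)
  finally show ?thesis by simp
qed

lemma exp_shift:
  fixes f :: "'a \<Rightarrow> real"
  assumes "\<And>x. \<bar>f x\<bar> \<le> B"
  shows "measure_pmf.expectation p (\<lambda>x. f x - c) = measure_pmf.expectation p f - c"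
proof -
  have "integrable (measure_pmf p) f" by (rule integrable_bdd[OF assms])
  thus ?thesis by simp
qed

lemma TV_half:
  fixes f :: "'a \<Rightarrow> real"
  assumes "\<And>x. 0 \<le> f x" "\<And>x. f x \<le> B"
  shows "measure_pmf.expectation p f - measure_pmf.expectation q f \<le> B / 2 * TV p q"
proof -
  have b: "\<bar>f x - B/2\<bar> \<le> B/2" for x using assms[of x] unfolding abs_le_iff by linarith
  have fb: "\<bar>f x\<bar> \<le> B" for x using assms[of x] by auto
  have "\<bar>measure_pmf.expectation p (\<lambda>x. f x - B/2) - measure_pmf.expectation q (\<lambda>x. f x - B/2)\<bar> \<le> B/2 * TV p q"
    by (rule TV_crude[OF b])
  hence "\<bar>measure_pmf.expectation p f - measure_pmf.expectation q f\<bar> \<le> B/2 * TV p q"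
    unfolding exp_shift[OF fb] by simp
  thus ?thesis by linarith
qed

context mdp begin

lemma step_exp:
  fixes f :: "'s \<times> 'a \<Rightarrow> real"
  assumes "\<And>x. \<bar>f x\<bar> \<le> B"
  shows "measure_pmf.expectation (sa_dist T \<pi> s (Suc t)) f
    = measure_pmf.expectation (sa_dist T \<pi> s t)
        (\<lambda>(x, a). measure_pmf.expectation (T x a) (\<lambda>x'. measure_pmf.expectation (\<pi> x') (\<lambda>a'. f (x', a'))))"
proof -
  have "measure_pmf.expectation (sa_dist T \<pi> s (Suc t)) f = measure_pmf.expectation (sa_dist T \<pi> s t)
     (\<lambda>y. measure_pmf.expectation
       ((\<lambda>(x, a). bind_pmf (T x a) (\<lambda>x'. map_pmf (\<lambda>a'. (x', a')) (\<pi> x'))) y) f)"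
    by (simp only: sa_dist.simps, rule exp_bind_pmf[OF assms])
  also have "\<dots> = measure_pmf.expectation (sa_dist T \<pi> s t)
        (\<lambda>(x, a). measure_pmf.expectation (T x a) (\<lambda>x'. measure_pmf.expectation (\<pi> x') (\<lambda>a'. f (x', a'))))"
  proof (rule Bochner_Integration.integral_cong[OF refl])
    fix y :: "'s \<times> 'a"
    obtain x a where y: "y = (x, a)" by (cases y)
    show "measure_pmf.expectation
       ((\<lambda>(x, a). bind_pmf (T x a) (\<lambda>x'. map_pmf (\<lambda>a'. (x', a')) (\<pi> x'))) y) f =
       (\<lambda>(x, a). measure_pmf.expectation (T x a) (\<lambda>x'. measure_pmf.expectation (\<pi> x') (\<lambda>a'. f (x', a')))) y"
      unfolding y by (simp add: exp_bind_pmf[OF assms])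
  qed
  finally show ?thesis .
qed

definition phi :: "('s,'a) kernel \<Rightarrow> ('s,'a) policy \<Rightarrow> ('s \<times> 'a \<Rightarrow> real) \<Rightarrow> 's \<times> 'a \<Rightarrow> real" where
  "phi T \<pi> f = (\<lambda>(x, a). measure_pmf.expectation (T x a) (\<lambda>x'. measure_pmf.expectation (\<pi> x') (\<lambda>a'. f (x', a'))))"

lemma phi_abs: "(\<And>x. \<bar>f x\<bar> \<le> B) \<Longrightarrow> \<bar>phi T \<pi> f y\<bar> \<le> B"
  unfolding phi_def by (cases y) (auto intro!: exp_bounded)

lemma phi_01: "(\<And>x. 0 \<le> f x \<and> f x \<le> 1) \<Longrightarrow> 0 \<le> phi T \<pi> f y \<and> phi T \<pi> f y \<le> 1"
  unfolding phi_def
  by (cases y) (auto intro!: exp_lb[where B=1] exp_ub[where B=1] exp_bounded simp: abs_le_iff)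

lemma rho_fix:
  fixes f :: "'s \<times> 'a \<Rightarrow> real"
  assumes "\<And>x. \<bar>f x\<bar> \<le> B"
  shows "measure_pmf.expectation (rhoP s0 T \<pi>) f
     = (1 - \<gamma>) * measure_pmf.expectation (sa_dist T \<pi> s0 0) f
       + \<gamma> * measure_pmf.expectation (rhoP s0 T \<pi>) (phi T \<pi> f)"
proof -
  let ?e = "\<lambda>t. \<gamma>^t * measure_pmf.expectation (sa_dist T \<pi> s0 t) f"
  have B: "0 \<le> B" using assms[of undefined] by linarith
  have sm: "summable ?e"
    by (rule summable_comparison_test'[OF summ_geo[of B]])
       (use g0 in \<open>auto simp: abs_mult intro!: mult_left_mono exp_bounded assms\<close>)
  have sm2: "summable (\<lambda>t. \<gamma>^t * measure_pmf.expectation (sa_dist T \<pi> s0 t) (phi T \<pi> f))"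
    by (rule summable_comparison_test'[OF summ_geo[of B]])
       (use g0 in \<open>auto simp: abs_mult intro!: mult_left_mono exp_bounded phi_abs assms\<close>)
  have "(\<Sum>t. ?e t) = ?e 0 + (\<Sum>t. ?e (Suc t))"
    using suminf_split_head[OF sm] by simp
  also have "(\<Sum>t. ?e (Suc t)) = (\<Sum>t. \<gamma> * (\<gamma>^t * measure_pmf.expectation (sa_dist T \<pi> s0 t) (phi T \<pi> f)))"
  proof -
    have st: "measure_pmf.expectation (sa_dist T \<pi> s0 (Suc t)) f = measure_pmf.expectation (sa_dist T \<pi> s0 t) (phi T \<pi> f)" for t
      unfolding phi_def by (rule step_exp[OF assms])
    show ?thesis by (simp only: st power_Suc mult.assoc)
  qed
  also have "\<dots> = \<gamma> * (\<Sum>t. \<gamma>^t * measure_pmf.expectation (sa_dist T \<pi> s0 t) (phi T \<pi> f))"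
    by (rule suminf_mult[OF sm2])
  finally have "(\<Sum>t. ?e t) = ?e 0 + \<gamma> * (\<Sum>t. \<gamma>^t * measure_pmf.expectation (sa_dist T \<pi> s0 t) (phi T \<pi> f))" .
  thus ?thesis
    unfolding exp_rho[OF assms] exp_rho[OF phi_abs[OF assms]] by (simp add: algebra_simps)
qed

lemma perturb:
  fixes f :: "'s \<times> 'a \<Rightarrow> real"
  assumes f01: "\<And>x. 0 \<le> f x \<and> f x \<le> 1"
  shows "measure_pmf.expectation (rhoP s0 T \<pi>) f - measure_pmf.expectation (rhoP s0 T' \<pi>) f
     \<le> \<gamma> / (1 - \<gamma>) * measure_pmf.expectation (rhoP s0 T' \<pi>) (\<lambda>(x, a). TV (T x a) (T' x a))"
proof -
  define F where "F = {f :: 's \<times> 'a \<Rightarrow> real. \<forall>x. 0 \<le> f x \<and> f x \<le> 1}"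
  define dl where "dl = (\<lambda>f :: 's \<times> 'a \<Rightarrow> real. measure_pmf.expectation (rhoP s0 T \<pi>) f - measure_pmf.expectation (rhoP s0 T' \<pi>) f)"
  define eps where "eps = measure_pmf.expectation (rhoP s0 T' \<pi>) (\<lambda>(x, a). TV (T x a) (T' x a))"
  define D where "D = (SUP f\<in>F. dl f)"
  have F01: "f \<in> F \<Longrightarrow> \<bar>f x\<bar> \<le> 1" for f x
  proof -
    assume "f \<in> F" hence "0 \<le> f x \<and> f x \<le> 1" unfolding F_def by blast
    thus ?thesis by linarith
  qed
  have dl_bd: "dl f \<le> 2" if "f \<in> F" for f
  proof -
    have "\<bar>measure_pmf.expectation (rhoP s0 T \<pi>) f\<bar> \<le> 1" "\<bar>measure_pmf.expectation (rhoP s0 T' \<pi>) f\<bar> \<le> 1"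
      by (rule exp_bounded, rule F01[OF that])+
    thus ?thesis unfolding dl_def by linarith
  qed
  have bdd: "bdd_above (dl ` F)" using dl_bd by (auto intro!: bdd_aboveI2)
  have Fne: "F \<noteq> {}" by (auto simp: F_def intro!: exI[of _ "\<lambda>_. 0"])
  have key: "dl f \<le> \<gamma> * D + \<gamma> * eps" if "f \<in> F" for f
  proof -
    have fb: "\<And>x. \<bar>f x\<bar> \<le> 1" using F01[OF that] .
    have d0: "sa_dist T \<pi> s0 0 = sa_dist T' \<pi> s0 0" by simp
    have "dl f = \<gamma> * (measure_pmf.expectation (rhoP s0 T \<pi>) (phi T \<pi> f)
                   - measure_pmf.expectation (rhoP s0 T' \<pi>) (phi T' \<pi> f))"
      unfolding dl_def rho_fix[OF fb, of s0 T] rho_fix[OF fb, of s0 T'] d0 by (simp add: algebra_simps)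
    also have "\<dots> = \<gamma> * dl (phi T \<pi> f) + \<gamma> * (measure_pmf.expectation (rhoP s0 T' \<pi>) (phi T \<pi> f)
                   - measure_pmf.expectation (rhoP s0 T' \<pi>) (phi T' \<pi> f))"
      unfolding dl_def by (simp add: algebra_simps)
    also have "dl (phi T \<pi> f) \<le> D"
      unfolding D_def by (rule cSUP_upper[OF _ bdd]) (use phi_01 that in \<open>auto simp: F_def\<close>)
    also have "measure_pmf.expectation (rhoP s0 T' \<pi>) (phi T \<pi> f)
                   - measure_pmf.expectation (rhoP s0 T' \<pi>) (phi T' \<pi> f) \<le> eps"
    proof -
      have i1: "integrable (measure_pmf (rhoP s0 T' \<pi>)) (phi T \<pi> f)" by (rule integrable_bdd[OF phi_abs[OF fb]])
      have i2: "integrable (measure_pmf (rhoP s0 T' \<pi>)) (phi T' \<pi> f)" by (rule integrable_bdd[OF phi_abs[OF fb]])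
      have "measure_pmf.expectation (rhoP s0 T' \<pi>) (phi T \<pi> f)
                   - measure_pmf.expectation (rhoP s0 T' \<pi>) (phi T' \<pi> f)
           = measure_pmf.expectation (rhoP s0 T' \<pi>) (\<lambda>y. phi T \<pi> f y - phi T' \<pi> f y)"
        using i1 i2 by simp
      also have "\<dots> \<le> eps" unfolding eps_def
      proof (rule exp_mono_bdd)
        show "\<bar>phi T \<pi> f y - phi T' \<pi> f y\<bar> \<le> 2" for y
        proof -
          have "\<bar>phi T \<pi> f y\<bar> \<le> 1" "\<bar>phi T' \<pi> f y\<bar> \<le> 1" by (rule phi_abs, rule fb)+
          thus ?thesis by linarith
        qed
        show "\<bar>(\<lambda>(x, a). TV (T x a) (T' x a)) y\<bar> \<le> 2" for y by (cases y) (simp add: TV_nn TV_le2)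
        show "phi T \<pi> f y - phi T' \<pi> f y \<le> (\<lambda>(x, a). TV (T x a) (T' x a)) y" for y
        proof -
          obtain x a where y: "y = (x, a)" by (cases y)
          have "\<bar>measure_pmf.expectation (\<pi> x') (\<lambda>a'. f (x', a'))\<bar> \<le> 1" for x'
            by (rule exp_bounded) (rule fb)
          hence "\<bar>phi T \<pi> f y - phi T' \<pi> f y\<bar> \<le> 1 * TV (T x a) (T' x a)"
            unfolding phi_def y by (simp only: prod.case) (rule TV_crude)
          thus ?thesis by (simp add: y)
        qed
      qed
      finally show ?thesis .
    qed
    finally show ?thesis using g0 by (simp add: mult_left_mono)
  qed
  have "D \<le> \<gamma> * D + \<gamma> * eps"
    unfolding D_def by (rule cSUP_least[OF Fne]) (rule key[unfolded D_def])
  hence "(1 - \<gamma>) * D \<le> \<gamma> * eps" by (simp add: algebra_simps)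
  hence "D \<le> \<gamma> * eps / (1 - \<gamma>)" using g1 by (simp add: field_simps)
  moreover have "dl f \<le> D" unfolding D_def by (rule cSUP_upper[OF _ bdd]) (use f01 in \<open>auto simp: F_def\<close>)
  ultimately show ?thesis unfolding dl_def eps_def by simp
qed

end

lemma wtr_nn: "0 \<le> \<zeta> \<Longrightarrow> 0 \<le> wtr \<zeta> (pmf \<rho>) \<mu>h x"
  by (auto simp: wtr_def)

lemma wtr_le: "0 \<le> \<zeta> \<Longrightarrow> wtr \<zeta> (pmf \<rho>) \<mu>h x \<le> \<zeta>"
  by (auto simp: wtr_def ratio_exceeds_def)

lemma wtr_abs: "0 \<le> \<zeta> \<Longrightarrow> \<bar>wtr \<zeta> (pmf \<rho>) \<mu>h x\<bar> \<le> \<zeta>"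
  using wtr_nn wtr_le by (metis abs_of_nonneg)

lemma wtr_point:
  "pmf \<rho> x = pmf \<mu>h x * wtr \<zeta> (pmf \<rho>) \<mu>h x
     + (if ratio_exceeds \<zeta> (pmf \<rho>) \<mu>h x then pmf \<rho> x else 0)"
proof (cases "ratio_exceeds \<zeta> (pmf \<rho>) \<mu>h x")
  case True thus ?thesis by (simp add: wtr_def)
next
  case False
  show ?thesis
  proof (cases "pmf \<mu>h x = 0")
    case True
    with False have "pmf \<rho> x = 0" unfolding ratio_exceeds_def using pmf_nonneg[of \<rho> x] by auto
    thus ?thesis using False True by (simp add: wtr_def)
  next
    case nz: False
    thus ?thesis using False by (simp add: wtr_def)
  qed
qed

lemma exp_split:
  fixes h :: "'x \<Rightarrow> real"
  assumes "0 \<le> \<zeta>" "\<And>x. \<bar>h x\<bar> \<le> B"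
  shows "measure_pmf.expectation \<rho> h = measure_pmf.expectation \<mu>h (\<lambda>x. wtr \<zeta> (pmf \<rho>) \<mu>h x * h x)
     + measure_pmf.expectation \<rho> (\<lambda>x. (if ratio_exceeds \<zeta> (pmf \<rho>) \<mu>h x then 1 else 0) * h x)"
proof -
  let ?w = "wtr \<zeta> (pmf \<rho>) \<mu>h"
  let ?e = "\<lambda>x. (if ratio_exceeds \<zeta> (pmf \<rho>) \<mu>h x then 1 else 0) * h x"
  have b1: "\<bar>?w x * h x\<bar> \<le> \<zeta> * B" for x
    unfolding abs_mult by (rule mult_mono[OF wtr_abs[OF assms(1)] assms(2)]) (use assms(1) in auto)
  have b2: "\<bar>?e x\<bar> \<le> B" for x using assms(2)[of x] by auto
  have "measure_pmf.expectation \<rho> h = (\<Sum>\<^sub>\<infinity>x. pmf \<rho> x * h x)" by (rule exp_infsum[OF assms(2)])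
  also have "\<dots> = (\<Sum>\<^sub>\<infinity>x. pmf \<mu>h x * (?w x * h x) + pmf \<rho> x * ?e x)"
  proof (rule infsum_cong)
    fix x
    show "pmf \<rho> x * h x = pmf \<mu>h x * (?w x * h x) + pmf \<rho> x * ?e x"
      by (subst wtr_point[of \<rho> x \<mu>h \<zeta>]) (auto simp: algebra_simps)
  qed
  also have "\<dots> = (\<Sum>\<^sub>\<infinity>x. pmf \<mu>h x * (?w x * h x)) + (\<Sum>\<^sub>\<infinity>x. pmf \<rho> x * ?e x)"
    by (rule infsum_add[OF pmf_mult_summable_on[OF b1] pmf_mult_summable_on[OF b2]])
  also have "\<dots> = measure_pmf.expectation \<mu>h (\<lambda>x. ?w x * h x) + measure_pmf.expectation \<rho> ?e"
    by (simp add: exp_infsum[OF b1] exp_infsum[OF b2])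
  finally show ?thesis .
qed

lemma exp_split_le:
  fixes h :: "'x \<Rightarrow> real"
  assumes "0 \<le> \<zeta>" "\<And>x. \<bar>h x\<bar> \<le> B" "\<And>x. 0 \<le> h x"
  shows "measure_pmf.expectation \<mu>h (\<lambda>x. wtr \<zeta> (pmf \<rho>) \<mu>h x * h x) \<le> measure_pmf.expectation \<rho> h"
proof -
  have "0 \<le> measure_pmf.expectation \<rho> (\<lambda>x. (if ratio_exceeds \<zeta> (pmf \<rho>) \<mu>h x then 1 else 0) * h x)"
    by (rule integral_nonneg_AE) (use assms(3) in auto)
  thus ?thesis using exp_split[where h=h and B=B and \<rho>=\<rho> and \<mu>h=\<mu>h, OF assms(1,2)] by linarith
qed

lemma exp_indicator_single:
  "measure_pmf.expectation p (\<lambda>y. if y = x0 then c else 0) = pmf p x0 * c"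
proof -
  have "(\<lambda>y. if y = x0 then c else 0) = (\<lambda>y. indicator {x0} y * c)"
    by (auto simp: indicator_def)
  thus ?thesis by (simp add: measure_pmf_single)
qed

lemma mu_bind:
  fixes \<mu> :: "('s \<times> 'a \<times> 's) pmf"
  assumes fac: "\<forall>s a s'. pmf \<mu> (s, a, s') = pmf (sa_marg \<mu>) (s, a) * pmf (Tstar s a) s'"
  shows "\<mu> = bind_pmf (sa_marg \<mu>) (\<lambda>(s, a). map_pmf (\<lambda>s'. (s, a, s')) (Tstar s a))"
proof (rule pmf_eqI)
  fix z :: "'s \<times> 'a \<times> 's"
  obtain s a s' where z: "z = (s, a, s')" by (cases z)
  have k: "pmf ((\<lambda>(s1, a1). map_pmf (\<lambda>s'. (s1, a1, s')) (Tstar s1 a1)) y) (s, a, s')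
      = (if y = (s, a) then pmf (Tstar s a) s' else 0)" for y
  proof -
    obtain s1 a1 where y: "y = (s1, a1)" by (cases y)
    show ?thesis
    proof (cases "y = (s, a)")
      case True
      have "inj (\<lambda>s'. (s, a, s'))" by (auto intro: injI)
      from pmf_map_inj'[OF this, of "Tstar s a" s'] show ?thesis using True y by simp
    next
      case False
      hence "(s, a, s') \<notin> set_pmf (map_pmf (\<lambda>s'. (s1, a1, s')) (Tstar s1 a1))" using y by auto
      hence "pmf (map_pmf (\<lambda>s'. (s1, a1, s')) (Tstar s1 a1)) (s, a, s') = 0" by (simp add: pmf_eq_0_set_pmf)
      thus ?thesis using False y by auto
    qed
  qed
  show "pmf \<mu> z = pmf (bind_pmf (sa_marg \<mu>) (\<lambda>(s, a). map_pmf (\<lambda>s'. (s, a, s')) (Tstar s a))) z"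
    unfolding z pmf_bind k exp_indicator_single using fac by simp
qed

lemma exp_range_diff:
  fixes f :: "'a \<Rightarrow> real"
  assumes "\<And>x. 0 \<le> f x" "\<And>x. f x \<le> B"
  shows "\<bar>measure_pmf.expectation p f - measure_pmf.expectation q f\<bar> \<le> B"
proof -
  have fb: "\<bar>f x\<bar> \<le> B" for x using assms[of x] by auto
  have "0 \<le> measure_pmf.expectation p f" "measure_pmf.expectation p f \<le> B"
       "0 \<le> measure_pmf.expectation q f" "measure_pmf.expectation q f \<le> B"
    by (rule exp_lb[OF assms(1) fb] exp_ub[OF assms(2) fb])+
  thus ?thesis by linarith
qed

lemma arithB:
  fixes \<gamma> X :: real
  assumes "0 \<le> \<gamma>" "\<gamma> < 1" "0 \<le> X"
  shows "\<gamma> / (1 - \<gamma>) * X + X / (1 - \<gamma>) + 5 * (\<gamma> / (1 - \<gamma>)) * X / (1 - \<gamma>) \<le> 6 * X / (1 - \<gamma>)^2"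
proof -
  define d where "d = 1 - \<gamma>"
  have d: "0 < d" "\<gamma> = 1 - d" "d \<le> 1" using assms by (auto simp: d_def)
  have "\<gamma> / d * X + X / d + 5 * (\<gamma> / d) * X / d = (X * (\<gamma> * d + d + 5 * \<gamma>)) / d^2"
    using d by (simp add: field_simps power2_eq_square)
  also have "\<dots> \<le> (X * 6) / d^2"
  proof (rule divide_right_mono[OF mult_left_mono[OF _ assms(3)]])
    have "\<gamma> * d \<le> 1 * d" using d assms by (intro mult_right_mono) auto
    thus "\<gamma> * d + d + 5 * \<gamma> \<le> 6" using d by linarith
  qed simp
  finally show ?thesis by (simp add: d_def mult.commute)
qed

locale setting = mdp r \<gamma> for r :: "'s \<Rightarrow> 'a \<Rightarrow> real" and \<gamma> :: real +
  fixes s0 :: 's and \<zeta> :: real and \<mu>h :: "('s \<times> 'a) pmf" and \<mu> :: "('s \<times> 'a \<times> 's) pmf"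
    and Tstar :: "('s,'a) kernel" and G :: "('s \<Rightarrow> real) set"
  assumes z0: "0 < \<zeta>" and Gfin: "finite G" and Gne: "G \<noteq> {}"
    and Gb: "\<forall>g\<in>G. \<forall>s. 0 \<le> g s \<and> g s \<le> Vmax r \<gamma>"
    and fac: "\<forall>s a s'. pmf \<mu> (s, a, s') = pmf (sa_marg \<mu>) (s, a) * pmf (Tstar s a) s'"
begin

abbreviation "Vm \<equiv> Vmax r \<gamma>"
abbreviation "\<nu> \<equiv> sa_marg \<mu>"

definition W where "W \<pi> T = w_pol \<gamma> s0 \<zeta> \<mu>h \<pi> T"

lemma W_eq: "W \<pi> T = wtr \<zeta> (pmf (rhoP s0 T \<pi>)) \<mu>h"
  by (simp add: W_def w_pol_def occ_eq)

lemma W_nn: "0 \<le> W \<pi> T x" unfolding W_eq by (rule wtr_nn) (use z0 in auto)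
lemma W_le: "W \<pi> T x \<le> \<zeta>" unfolding W_eq by (rule wtr_le) (use z0 in auto)
lemma W_abs: "\<bar>W \<pi> T x\<bar> \<le> \<zeta>" using W_nn W_le by (simp add: abs_of_nonneg)

definition mean where
  "mean D g T \<pi> = (1 / real (length D)) * (\<Sum>(s, a, s') \<leftarrow> D. W \<pi> T (s, a) * (fT T g s a - g s'))"

definition Xf where "Xf g T \<pi> = (\<lambda>(s, a, s'). W \<pi> T (s, a) * (fT T g s a - g s'))"

definition EXX where "EXX g T \<pi> = measure_pmf.expectation \<mu> (Xf g T \<pi>)"

lemma emp_mean: "emp_loss (w_pol \<gamma> s0 \<zeta> \<mu>h \<pi> T) D g T = \<bar>mean D g T \<pi>\<bar>"
  by (simp add: emp_loss_def mean_def W_def)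

lemma g_nn: "g \<in> G \<Longrightarrow> 0 \<le> g s" using Gb by auto
lemma g_le: "g \<in> G \<Longrightarrow> g s \<le> Vm" using Gb by auto
lemma g_abs: "g \<in> G \<Longrightarrow> \<bar>g s\<bar> \<le> Vm" using g_nn g_le by (simp add: abs_of_nonneg)

lemma fT_nn: "g \<in> G \<Longrightarrow> 0 \<le> fT T g s a"
  unfolding fT_def by (rule exp_lb[where B=Vm]) (auto intro: g_nn g_abs)
lemma fT_le: "g \<in> G \<Longrightarrow> fT T g s a \<le> Vm"
  unfolding fT_def by (rule exp_ub[where B=Vm]) (auto intro: g_le g_abs)

lemma Xf_abs:
  assumes g: "g \<in> G"
  shows "\<bar>Xf g T \<pi> z\<bar> \<le> \<zeta> * Vm"
proof -
  obtain s a s' where z: "z = (s, a, s')" by (cases z)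
  have "0 \<le> fT T g s a" "fT T g s a \<le> Vm" "0 \<le> g s'" "g s' \<le> Vm"
    by (rule fT_nn[OF g] fT_le[OF g] g_nn[OF g] g_le[OF g])+
  hence "\<bar>fT T g s a - g s'\<bar> \<le> Vm" by (simp add: abs_le_iff)
  hence "\<bar>W \<pi> T (s, a)\<bar> * \<bar>fT T g s a - g s'\<bar> \<le> \<zeta> * Vm"
    by (intro mult_mono W_abs) (use z0 in auto)
  thus ?thesis unfolding Xf_def z by (simp add: abs_mult)
qed

lemma EXX_eq:
  assumes g: "g \<in> G"
  shows "EXX g T \<pi> = measure_pmf.expectation \<nu> (\<lambda>(s, a). W \<pi> T (s, a) * (fT T g s a - fT Tstar g s a))"
proof -
  have "EXX g T \<pi> = measure_pmf.expectation \<nu>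
     (\<lambda>y. measure_pmf.expectation ((\<lambda>(s, a). map_pmf (\<lambda>s'. (s, a, s')) (Tstar s a)) y) (Xf g T \<pi>))"
    unfolding EXX_def by (subst mu_bind[OF fac]) (rule exp_bind_pmf[OF Xf_abs[OF g]])
  also have "\<dots> = measure_pmf.expectation \<nu> (\<lambda>(s, a). W \<pi> T (s, a) * (fT T g s a - fT Tstar g s a))"
  proof (rule Bochner_Integration.integral_cong[OF refl])
    fix y :: "'s \<times> 'a"
    obtain s a where y: "y = (s, a)" by (cases y)
    have ig: "integrable (measure_pmf (Tstar s a)) g" by (rule integrable_bdd[OF g_abs[OF g]])
    have "measure_pmf.expectation (Tstar s a) (\<lambda>s'. W \<pi> T (s, a) * (fT T g s a - g s'))
        = W \<pi> T (s, a) * (fT T g s a - fT Tstar g s a)"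
      using ig by (simp add: fT_def)
    thus "measure_pmf.expectation ((\<lambda>(s, a). map_pmf (\<lambda>s'. (s, a, s')) (Tstar s a)) y) (Xf g T \<pi>)
        = (\<lambda>(s, a). W \<pi> T (s, a) * (fT T g s a - fT Tstar g s a)) y"
      by (simp add: y Xf_def)
  qed
  finally show ?thesis .
qed

lemma lb_eq:
  "lb r \<gamma> s0 \<zeta> \<mu>h G D T \<pi> = eta r \<gamma> s0 T \<pi> - (1 / (1 - \<gamma>)) *
     ((SUP g\<in>G. \<bar>mean D g T \<pi>\<bar>) + Vm * measure_pmf.expectation (rhoP s0 T \<pi>)
        (\<lambda>x. if ratio_exceeds \<zeta> (pmf (rhoP s0 T \<pi>)) \<mu>h x then 1 else 0))"
  unfolding lb_def emp_mean
  by (subst occ_exp_rho[where B=1]) (auto simp: occ_eq)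

lemma L_nn: "0 \<le> (SUP g\<in>G. \<bar>mean D g T \<pi>\<bar>)"
proof -
  obtain g where "g \<in> G" using Gne by auto
  have "\<bar>mean D g T \<pi>\<bar> \<le> (SUP g\<in>G. \<bar>mean D g T \<pi>\<bar>)"
    by (rule cSUP_upper[OF \<open>g \<in> G\<close>]) (use Gfin in auto)
  thus ?thesis by linarith
qed

lemma gamma_scale:
  assumes "E \<le> X" "0 \<le> X"
  shows "\<gamma> / (1 - \<gamma>) * E \<le> X / (1 - \<gamma>)"
proof -
  have c: "0 \<le> \<gamma> / (1 - \<gamma>)" using g0 g1 by simp
  have "\<gamma> / (1 - \<gamma>) * E \<le> \<gamma> / (1 - \<gamma>) * X" by (rule mult_left_mono[OF assms(1) c])
  also have "\<dots> = \<gamma> * (X / (1 - \<gamma>))" by simp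
  also have "\<dots> \<le> X / (1 - \<gamma>)"
    by (rule mult_left_le_one_le) (use g0 g1 assms(2) in auto)
  finally show ?thesis .
qed

lemma sideA:
  assumes g: "g \<in> G"
    and eV: "eps_V r \<gamma> s0 \<zeta> \<mu>h \<mu> Tstar G T \<pi> = \<bar>measure_pmf.expectation \<nu> (\<lambda>(s, a). w_pol \<gamma> s0 \<zeta> \<mu>h \<pi> T (s, a) *
           (measure_pmf.expectation (T s a) (\<lambda>s'. g s' - Vfun r \<gamma> Tstar \<pi> s')
            - measure_pmf.expectation (Tstar s a) (\<lambda>s'. g s' - Vfun r \<gamma> Tstar \<pi> s')))\<bar>"
    and dv: "\<bar>mean D g T \<pi> - EXX g T \<pi>\<bar> \<le> dev"
  shows "lb r \<gamma> s0 \<zeta> \<mu>h G D T \<pi> - (dev + eps_V r \<gamma> s0 \<zeta> \<mu>h \<mu> Tstar G T \<pi> + \<zeta> * Vm * TV \<mu>h \<nu>) / (1 - \<gamma>)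
     \<le> eta r \<gamma> s0 Tstar \<pi>"
proof -
  define \<rho> where "\<rho> = rhoP s0 T \<pi>"
  define V where "V = Vfun r \<gamma> Tstar \<pi>"
  define w where "w = W \<pi> T"
  define \<Delta> where "\<Delta> = (\<lambda>(x, a). measure_pmf.expectation (T x a) V - measure_pmf.expectation (Tstar x a) V)"
  define exc where "exc = (\<lambda>x. if ratio_exceeds \<zeta> (pmf \<rho>) \<mu>h x then 1 else (0::real))"
  define L where "L = (SUP g\<in>G. \<bar>mean D g T \<pi>\<bar>)"
  define eV' where "eV' = eps_V r \<gamma> s0 \<zeta> \<mu>h \<mu> Tstar G T \<pi>"
  have Vnn: "0 \<le> V x" for x unfolding V_def by (rule V_nn)
  have Vle: "V x \<le> Vm" for x unfolding V_def by (rule V_le)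
  have Vabs: "\<bar>V x\<bar> \<le> Vm" for x unfolding V_def by (rule V_abs)
  have \<Delta>abs: "\<bar>\<Delta> y\<bar> \<le> Vm" for y
    unfolding \<Delta>_def by (cases y) (simp add: exp_range_diff[OF Vnn Vle])
  have wnn: "0 \<le> w x" and wle: "w x \<le> \<zeta>" for x unfolding w_def by (rule W_nn, rule W_le)
  have wabs: "\<bar>w x\<bar> \<le> \<zeta>" for x unfolding w_def by (rule W_abs)
  have z: "0 \<le> \<zeta>" using z0 by simp
  have w\<Delta>abs: "\<bar>w x * \<Delta> x\<bar> \<le> \<zeta> * Vm" for x
    unfolding abs_mult by (rule mult_mono[OF wabs \<Delta>abs]) (use z in auto)
  have exc01: "exc x = 0 \<or> exc x = 1" for x by (simp add: exc_def)
  have excabs: "\<bar>exc x\<bar> \<le> 1" for x by (simp add: exc_def)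
  have sim: "eta r \<gamma> s0 T \<pi> - eta r \<gamma> s0 Tstar \<pi> = \<gamma> / (1 - \<gamma>) * measure_pmf.expectation \<rho> \<Delta>"
    unfolding \<rho>_def \<Delta>_def V_def by (rule simulation)
  have split: "measure_pmf.expectation \<rho> \<Delta> = measure_pmf.expectation \<mu>h (\<lambda>x. w x * \<Delta> x)
      + measure_pmf.expectation \<rho> (\<lambda>x. exc x * \<Delta> x)"
    unfolding w_def W_eq exc_def \<rho>_def by (rule exp_split[OF z \<Delta>abs])
  have e1: "measure_pmf.expectation \<rho> (\<lambda>x. exc x * \<Delta> x) \<le> Vm * measure_pmf.expectation \<rho> exc"
  proof -
    have "measure_pmf.expectation \<rho> (\<lambda>x. exc x * \<Delta> x) \<le> measure_pmf.expectation \<rho> (\<lambda>x. Vm * exc x)"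
    proof (rule exp_mono_bdd)
      show "\<bar>exc x * \<Delta> x\<bar> \<le> Vm" for x
        using exc01[of x] \<Delta>abs[of x] by auto
      show "\<bar>Vm * exc x\<bar> \<le> Vm" for x
        using exc01[of x] Vm_nn by auto
      show "exc x * \<Delta> x \<le> Vm * exc x" for x
        using exc01[of x] \<Delta>abs[of x] by (auto simp: abs_le_iff)
    qed
    thus ?thesis by simp
  qed
  have e2: "measure_pmf.expectation \<mu>h (\<lambda>x. w x * \<Delta> x) \<le> measure_pmf.expectation \<nu> (\<lambda>x. w x * \<Delta> x) + \<zeta> * Vm * TV \<mu>h \<nu>"
    using TV_crude[where f="\<lambda>x. w x * \<Delta> x" and p=\<mu>h and q=\<nu>, OF w\<Delta>abs] by linarith
  define F1 where "F1 = (\<lambda>(s, a). W \<pi> T (s, a) * (fT T g s a - fT Tstar g s a))"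
  define F2 where "F2 = (\<lambda>(s, a). w_pol \<gamma> s0 \<zeta> \<mu>h \<pi> T (s, a) *
           (measure_pmf.expectation (T s a) (\<lambda>s'. g s' - V s')
            - measure_pmf.expectation (Tstar s a) (\<lambda>s'. g s' - V s')))"
  have F1abs: "\<bar>F1 y\<bar> \<le> \<zeta> * Vm" for y
  proof -
    obtain s a where y: "y = (s, a)" by (cases y)
    have "0 \<le> fT T g s a" "fT T g s a \<le> Vm" "0 \<le> fT Tstar g s a" "fT Tstar g s a \<le> Vm"
      by (rule fT_nn[OF g] fT_le[OF g])+
    hence "\<bar>fT T g s a - fT Tstar g s a\<bar> \<le> Vm" by (simp add: abs_le_iff)
    hence "\<bar>W \<pi> T (s, a)\<bar> * \<bar>fT T g s a - fT Tstar g s a\<bar> \<le> \<zeta> * Vm"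
      by (intro mult_mono W_abs) (use z in auto)
    thus ?thesis by (simp add: F1_def y abs_mult)
  qed
  have gV: "\<bar>g s' - V s'\<bar> \<le> Vm" for s'
    using g_nn[OF g, of s'] g_le[OF g, of s'] Vnn[of s'] Vle[of s'] by (simp add: abs_le_iff)
  have F2abs: "\<bar>F2 y\<bar> \<le> \<zeta> * (2 * Vm)" for y
  proof -
    obtain s a where y: "y = (s, a)" by (cases y)
    have "\<bar>measure_pmf.expectation (T s a) (\<lambda>s'. g s' - V s')\<bar> \<le> Vm"
         "\<bar>measure_pmf.expectation (Tstar s a) (\<lambda>s'. g s' - V s')\<bar> \<le> Vm"
      by (rule exp_bounded, rule gV)+
    hence "\<bar>measure_pmf.expectation (T s a) (\<lambda>s'. g s' - V s')
            - measure_pmf.expectation (Tstar s a) (\<lambda>s'. g s' - V s')\<bar> \<le> 2 * Vm" by linarith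
    hence "\<bar>w_pol \<gamma> s0 \<zeta> \<mu>h \<pi> T (s, a)\<bar> * \<bar>measure_pmf.expectation (T s a) (\<lambda>s'. g s' - V s')
            - measure_pmf.expectation (Tstar s a) (\<lambda>s'. g s' - V s')\<bar> \<le> \<zeta> * (2 * Vm)"
      by (intro mult_mono W_abs[unfolded W_def]) (use z in auto)
    thus ?thesis by (simp add: F2_def y abs_mult)
  qed
  have pw: "w x * \<Delta> x = F1 x - F2 x" for x
  proof -
    obtain s a where y: "x = (s, a)" by (cases x)
    have ig: "integrable (measure_pmf p) g" for p by (rule integrable_bdd[OF g_abs[OF g]])
    have iV: "integrable (measure_pmf p) V" for p by (rule integrable_bdd[OF Vabs])
    have e: "measure_pmf.expectation p (\<lambda>s'. g s' - V s') = measure_pmf.expectation p g - measure_pmf.expectation p V" for p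
      using ig iV by simp
    show ?thesis by (simp only: y F1_def F2_def \<Delta>_def w_def W_def fT_def e prod.case) (simp add: algebra_simps)
  qed
  have e3: "measure_pmf.expectation \<nu> (\<lambda>x. w x * \<Delta> x) = EXX g T \<pi> - measure_pmf.expectation \<nu> F2"
  proof -
    have "measure_pmf.expectation \<nu> (\<lambda>x. w x * \<Delta> x) = measure_pmf.expectation \<nu> (\<lambda>x. F1 x - F2 x)"
      by (simp add: pw)
    also have "\<dots> = measure_pmf.expectation \<nu> F1 - measure_pmf.expectation \<nu> F2"
      using integrable_bdd[where f=F1 and p=\<nu>, OF F1abs] integrable_bdd[where f=F2 and p=\<nu>, OF F2abs] by simp
    finally show ?thesis unfolding EXX_eq[OF g] F1_def .
  qed
  have e3b: "- measure_pmf.expectation \<nu> F2 \<le> eV'"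
    unfolding eV'_def eV F2_def V_def by linarith
  have e4: "EXX g T \<pi> \<le> L + dev"
  proof -
    have "\<bar>mean D g T \<pi>\<bar> \<le> L" unfolding L_def by (rule cSUP_upper[OF g]) (use Gfin in auto)
    thus ?thesis using dv by linarith
  qed
  define K where "K = L + Vm * measure_pmf.expectation \<rho> exc"
  define R where "R = dev + eV' + \<zeta> * Vm * TV \<mu>h \<nu>"
  have E_le: "measure_pmf.expectation \<rho> \<Delta> \<le> K + R"
    unfolding K_def R_def using split e1 e2 e3 e3b e4 by linarith
  have Lnn: "0 \<le> L" unfolding L_def by (rule L_nn)
  have excnn: "0 \<le> measure_pmf.expectation \<rho> exc" by (rule exp_lb[OF _ excabs]) (simp add: exc_def)
  have devnn: "0 \<le> dev" using dv by linarith
  have eVnn: "0 \<le> eV'" unfolding eV'_def eV by simp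
  have KR: "0 \<le> K + R" unfolding K_def R_def
    using Lnn excnn devnn eVnn Vm_nn z TV_nn[of \<mu>h \<nu>] by (simp add: add_nonneg_nonneg)
  have "\<gamma> / (1 - \<gamma>) * measure_pmf.expectation \<rho> \<Delta> \<le> (K + R) / (1 - \<gamma>)"
    by (rule gamma_scale[OF E_le KR])
  moreover have "lb r \<gamma> s0 \<zeta> \<mu>h G D T \<pi> = eta r \<gamma> s0 T \<pi> - K / (1 - \<gamma>)"
    unfolding lb_eq K_def L_def exc_def \<rho>_def by simp
  ultimately show ?thesis using sim unfolding R_def eV'_def by (simp add: add_divide_distrib diff_divide_distrib)
qed

lemma half_bound:
  fixes \<rho> \<rho>s :: "('s \<times> 'a) pmf"
  shows "measure_pmf.expectation \<rho>s (\<lambda>x. if ratio_exceeds \<zeta> (pmf \<rho>) \<mu>h x \<and> \<not> ratio_exceeds (\<zeta> / 2) (pmf \<rho>s) \<mu>h x then 1 else (0::real))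
     \<le> measure_pmf.expectation \<rho> (\<lambda>x. if ratio_exceeds \<zeta> (pmf \<rho>) \<mu>h x \<and> \<not> ratio_exceeds (\<zeta> / 2) (pmf \<rho>s) \<mu>h x then 1 else (0::real)) / 2"
proof -
  define A where "A = (\<lambda>x. if ratio_exceeds \<zeta> (pmf \<rho>) \<mu>h x \<and> \<not> ratio_exceeds (\<zeta> / 2) (pmf \<rho>s) \<mu>h x then 1 else (0::real))"
  have Aabs: "\<bar>A x\<bar> \<le> 1" for x by (simp add: A_def)
  have A2abs: "\<bar>A x / 2\<bar> \<le> 1" for x by (simp add: A_def)
  have pw: "pmf \<rho>s x * A x \<le> pmf \<rho> x * (A x / 2)" for x
  proof (cases "ratio_exceeds \<zeta> (pmf \<rho>) \<mu>h x \<and> \<not> ratio_exceeds (\<zeta> / 2) (pmf \<rho>s) \<mu>h x")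
    case False thus ?thesis unfolding A_def by (simp only: if_False)
  next
    case True
    hence e1: "ratio_exceeds \<zeta> (pmf \<rho>) \<mu>h x" and e2: "\<not> ratio_exceeds (\<zeta> / 2) (pmf \<rho>s) \<mu>h x" by auto
    have "pmf \<rho>s x \<le> pmf \<rho> x / 2"
    proof (cases "pmf \<mu>h x = 0")
      case True
      thus ?thesis using e1 e2 pmf_nonneg[of \<rho>s x] unfolding ratio_exceeds_def by auto
    next
      case False
      hence mpos: "0 < pmf \<mu>h x" using pmf_nonneg[of \<mu>h x] by linarith
      have "\<zeta> < pmf \<rho> x / pmf \<mu>h x" using e1 False unfolding ratio_exceeds_def by auto
      hence a: "\<zeta> * pmf \<mu>h x < pmf \<rho> x" using mpos by (simp add: pos_less_divide_eq)
      have "pmf \<rho>s x / pmf \<mu>h x \<le> \<zeta> / 2" using e2 False unfolding ratio_exceeds_def by auto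
      hence b: "pmf \<rho>s x \<le> \<zeta> / 2 * pmf \<mu>h x" using mpos by (simp add: pos_divide_le_eq)
      show ?thesis using a b by linarith
    qed
    thus ?thesis using True by (simp add: A_def)
  qed
  have "measure_pmf.expectation \<rho>s A = (\<Sum>\<^sub>\<infinity>x. pmf \<rho>s x * A x)" by (rule exp_infsum[OF Aabs])
  also have "\<dots> \<le> (\<Sum>\<^sub>\<infinity>x. pmf \<rho> x * (A x / 2))"
    by (rule infsum_mono[OF pmf_mult_summable_on[OF Aabs] pmf_mult_summable_on[OF A2abs] pw])
  also have "\<dots> = measure_pmf.expectation \<rho> (\<lambda>x. A x / 2)" by (rule exp_infsum[OF A2abs, symmetric])
  also have "\<dots> = measure_pmf.expectation \<rho> A / 2" by simp
  finally show ?thesis unfolding A_def .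
qed

lemma sideB:
  assumes dv: "\<forall>g\<in>G. \<bar>mean D g T \<pi> - EXX g T \<pi>\<bar> \<le> dev"
    and eps: "\<epsilon> = occ_exp (occ \<gamma> s0 Tstar \<pi>) (\<lambda>(s, a). TV (T s a) (Tstar s a))"
  shows "eta r \<gamma> s0 Tstar \<pi> - 6 * Vm * \<epsilon> / (1 - \<gamma>)^2 - Vm * eps_mu \<gamma> s0 \<zeta> \<mu>h Tstar \<pi> / (1 - \<gamma>)
          - (dev + \<zeta> * Vm * TV \<mu>h \<nu> / 2) / (1 - \<gamma>) \<le> lb r \<gamma> s0 \<zeta> \<mu>h G D T \<pi>"
proof -
  define \<rho> where "\<rho> = rhoP s0 T \<pi>"
  define \<rho>s where "\<rho>s = rhoP s0 Tstar \<pi>"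
  define w where "w = W \<pi> T"
  define VT where "VT = Vfun r \<gamma> T \<pi>"
  define gc where "gc = \<gamma> / (1 - \<gamma>)"
  define TVf where "TVf = (\<lambda>(x, a). TV (T x a) (Tstar x a))"
  define L where "L = (SUP g\<in>G. \<bar>mean D g T \<pi>\<bar>)"
  define exc where "exc = (\<lambda>x. if ratio_exceeds \<zeta> (pmf \<rho>) \<mu>h x then 1 else (0::real))"
  define excs where "excs = (\<lambda>x. if ratio_exceeds (\<zeta> / 2) (pmf \<rho>s) \<mu>h x then 1 else (0::real))"
  define A where "A = (\<lambda>x. if ratio_exceeds \<zeta> (pmf \<rho>) \<mu>h x \<and> \<not> ratio_exceeds (\<zeta> / 2) (pmf \<rho>s) \<mu>h x then 1 else (0::real))"
  define \<epsilon>\<mu> where "\<epsilon>\<mu> = eps_mu \<gamma> s0 \<zeta> \<mu>h Tstar \<pi>"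
  have z: "0 \<le> \<zeta>" using z0 by simp
  have gcnn: "0 \<le> gc" unfolding gc_def using g0 g1 by simp
  have TVfnn: "0 \<le> TVf x" for x unfolding TVf_def by (cases x) (simp add: TV_nn)
  have TVfle: "TVf x \<le> 2" for x unfolding TVf_def by (cases x) (simp add: TV_le2)
  have TVfabs: "\<bar>TVf x\<bar> \<le> 2" for x using TVfnn[of x] TVfle[of x] by simp
  have eps': "\<epsilon> = measure_pmf.expectation \<rho>s TVf"
    unfolding eps \<rho>s_def TVf_def by (rule occ_exp_rho[where B=2]) (use TVfabs[unfolded TVf_def] in auto)
  have epsnn: "0 \<le> \<epsilon>" unfolding eps' by (rule exp_lb[OF TVfnn TVfabs])
  have wnn: "0 \<le> w x" and wle: "w x \<le> \<zeta>" and wabs: "\<bar>w x\<bar> \<le> \<zeta>" for x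
    unfolding w_def by (rule W_nn, rule W_le, rule W_abs)
  have B1: "eta r \<gamma> s0 Tstar \<pi> - gc * (Vm * \<epsilon>) \<le> eta r \<gamma> s0 T \<pi>"
  proof -
    have sim: "eta r \<gamma> s0 Tstar \<pi> - eta r \<gamma> s0 T \<pi> = gc * measure_pmf.expectation \<rho>s
       (\<lambda>(x, a). measure_pmf.expectation (Tstar x a) VT - measure_pmf.expectation (T x a) VT)"
      unfolding gc_def \<rho>s_def VT_def by (rule simulation)
    have VTabs: "\<bar>VT x\<bar> \<le> Vm" for x unfolding VT_def by (rule V_abs)
    have pw: "\<bar>(\<lambda>(x, a). measure_pmf.expectation (Tstar x a) VT - measure_pmf.expectation (T x a) VT) y\<bar> \<le> Vm * TVf y" for y
    proof -
      obtain x a where y: "y = (x, a)" by (cases y)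
      have "\<bar>measure_pmf.expectation (Tstar x a) VT - measure_pmf.expectation (T x a) VT\<bar> \<le> Vm * TV (Tstar x a) (T x a)"
        by (rule TV_crude[OF VTabs])
      thus ?thesis by (simp add: y TVf_def TV_sym)
    qed
    have "measure_pmf.expectation \<rho>s
       (\<lambda>(x, a). measure_pmf.expectation (Tstar x a) VT - measure_pmf.expectation (T x a) VT)
       \<le> measure_pmf.expectation \<rho>s (\<lambda>y. Vm * TVf y)"
    proof (rule exp_mono_bdd)
      show "\<bar>(\<lambda>(x, a). measure_pmf.expectation (Tstar x a) VT - measure_pmf.expectation (T x a) VT) y\<bar> \<le> Vm * 2" for y
        using pw[of y] TVfle[of y] Vm_nn by (meson mult_left_mono order.trans)
      show "\<bar>Vm * TVf y\<bar> \<le> Vm * 2" for y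
        using TVfle[of y] TVfnn[of y] Vm_nn by (simp add: abs_mult mult_left_mono)
      show "(\<lambda>(x, a). measure_pmf.expectation (Tstar x a) VT - measure_pmf.expectation (T x a) VT) y \<le> Vm * TVf y" for y
        using pw[of y] by linarith
    qed
    also have "\<dots> = Vm * \<epsilon>" unfolding eps' by simp
    finally show ?thesis using sim mult_left_mono[OF _ gcnn] by (smt (verit))
  qed
  have ErhoTV: "measure_pmf.expectation \<rho> TVf \<le> \<epsilon> + 2 * gc * \<epsilon>"
  proof -
    have "measure_pmf.expectation \<rho> (\<lambda>x. TVf x / 2) - measure_pmf.expectation \<rho>s (\<lambda>x. TVf x / 2)
        \<le> gc * measure_pmf.expectation \<rho>s (\<lambda>(x, a). TV (T x a) (Tstar x a))"
      unfolding \<rho>_def \<rho>s_def gc_def by (rule perturb) (use TVfnn TVfle in auto)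
    hence "measure_pmf.expectation \<rho> TVf / 2 - \<epsilon> / 2 \<le> gc * \<epsilon>"
      unfolding eps' TVf_def[symmetric] by simp
    thus ?thesis by linarith
  qed
  have B2: "L \<le> Vm * (\<epsilon> + 2 * gc * \<epsilon>) + \<zeta> * Vm * TV \<mu>h \<nu> / 2 + dev"
    unfolding L_def
  proof (rule cSUP_least[OF Gne])
    fix g assume g: "g \<in> G"
    define dg where "dg = (\<lambda>(s, a). fT T g s a - fT Tstar g s a)"
    define h where "h = (\<lambda>x. \<bar>dg x\<bar>)"
    have dgabs: "\<bar>dg x\<bar> \<le> Vm" for x
    proof -
      obtain s a where x: "x = (s, a)" by (cases x)
      have "0 \<le> fT T g s a" "fT T g s a \<le> Vm" "0 \<le> fT Tstar g s a" "fT Tstar g s a \<le> Vm"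
        by (rule fT_nn[OF g] fT_le[OF g])+
      thus ?thesis by (simp add: dg_def x abs_le_iff)
    qed
    have hnn: "0 \<le> h x" for x by (simp add: h_def)
    have habs: "\<bar>h x\<bar> \<le> Vm" for x using dgabs[of x] by (simp add: h_def)
    have hTV: "h x \<le> Vm * TVf x" for x
    proof -
      obtain s a where x: "x = (s, a)" by (cases x)
      have "\<bar>measure_pmf.expectation (T s a) g - measure_pmf.expectation (Tstar s a) g\<bar> \<le> Vm * TV (T s a) (Tstar s a)"
        by (rule TV_crude[OF g_abs[OF g]])
      thus ?thesis by (simp add: h_def dg_def x TVf_def fT_def)
    qed
    have whabs: "\<bar>w x * h x\<bar> \<le> \<zeta> * Vm" for x
      unfolding abs_mult by (rule mult_mono[OF wabs habs]) (use z in auto)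
    have wdgabs: "\<bar>w x * dg x\<bar> \<le> \<zeta> * Vm" for x
      unfolding abs_mult by (rule mult_mono[OF wabs dgabs]) (use z in auto)
    have EX1: "EXX g T \<pi> = measure_pmf.expectation \<nu> (\<lambda>x. w x * dg x)"
      unfolding EXX_eq[OF g] w_def dg_def by (rule Bochner_Integration.integral_cong) auto
    have "\<bar>EXX g T \<pi>\<bar> \<le> measure_pmf.expectation \<nu> (\<lambda>x. \<bar>w x * dg x\<bar>)"
      unfolding EX1 by (rule integral_abs_bound)
    also have "\<dots> = measure_pmf.expectation \<nu> (\<lambda>x. w x * h x)"
      by (rule Bochner_Integration.integral_cong) (auto simp: h_def abs_mult abs_of_nonneg[OF wnn])
    also have "\<dots> \<le> measure_pmf.expectation \<mu>h (\<lambda>x. w x * h x) + \<zeta> * Vm / 2 * TV \<nu> \<mu>h"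
      using TV_half[where f="\<lambda>x. w x * h x" and B="\<zeta> * Vm" and p=\<nu> and q=\<mu>h] whabs
        wnn hnn by (smt (verit) mult_nonneg_nonneg abs_le_iff)
    also have "measure_pmf.expectation \<mu>h (\<lambda>x. w x * h x) \<le> measure_pmf.expectation \<rho> h"
      unfolding w_def W_eq \<rho>_def by (rule exp_split_le[OF z habs hnn])
    also have "measure_pmf.expectation \<rho> h \<le> measure_pmf.expectation \<rho> (\<lambda>x. Vm * TVf x)"
      by (rule exp_mono_bdd[where B=Vm and B'="Vm * 2"])
         (use habs hTV TVfnn TVfle Vm_nn in \<open>auto simp: abs_mult intro: mult_left_mono\<close>)
    also have "\<dots> = Vm * measure_pmf.expectation \<rho> TVf" by simp
    also have "\<dots> \<le> Vm * (\<epsilon> + 2 * gc * \<epsilon>)" by (rule mult_left_mono[OF ErhoTV Vm_nn])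
    finally have "\<bar>EXX g T \<pi>\<bar> \<le> Vm * (\<epsilon> + 2 * gc * \<epsilon>) + \<zeta> * Vm * TV \<mu>h \<nu> / 2"
      by (simp add: TV_sym)
    thus "\<bar>mean D g T \<pi>\<bar> \<le> Vm * (\<epsilon> + 2 * gc * \<epsilon>) + \<zeta> * Vm * TV \<mu>h \<nu> / 2 + dev"
      using dv g by force
  qed
  have B3: "measure_pmf.expectation \<rho> exc \<le> \<epsilon>\<mu> + 3 * gc * \<epsilon>"
  proof -
    have excabs: "\<bar>excs x\<bar> \<le> 1" "\<bar>A x\<bar> \<le> 1" "\<bar>exc x\<bar> \<le> 1" for x by (auto simp: excs_def A_def exc_def)
    have em: "\<epsilon>\<mu> = measure_pmf.expectation \<rho>s excs"
      unfolding \<epsilon>\<mu>_def eps_mu_def excs_def \<rho>s_def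
      by (subst occ_exp_rho[where B=1]) (auto simp: occ_eq)
    have p1: "measure_pmf.expectation \<rho> excs - measure_pmf.expectation \<rho>s excs \<le> gc * \<epsilon>"
      unfolding eps' TVf_def \<rho>_def \<rho>s_def gc_def by (rule perturb) (auto simp: excs_def \<rho>s_def)
    have p2: "measure_pmf.expectation \<rho> A - measure_pmf.expectation \<rho>s A \<le> gc * \<epsilon>"
      unfolding eps' TVf_def \<rho>_def \<rho>s_def gc_def by (rule perturb) (auto simp: A_def \<rho>_def \<rho>s_def)
    have p3: "measure_pmf.expectation \<rho>s A \<le> measure_pmf.expectation \<rho> A / 2"
      unfolding A_def by (rule half_bound)
    have "measure_pmf.expectation \<rho> exc \<le> measure_pmf.expectation \<rho> (\<lambda>x. excs x + A x)"
      by (rule exp_mono_bdd[where B=1 and B'=2]) (auto simp: excs_def A_def exc_def)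
    also have "\<dots> = measure_pmf.expectation \<rho> excs + measure_pmf.expectation \<rho> A"
      using integrable_bdd[where f=excs and p=\<rho>, OF excabs(1)] integrable_bdd[where f=A and p=\<rho>, OF excabs(2)] by simp
    finally show ?thesis using p1 p2 p3 em by linarith
  qed
  have lbq: "lb r \<gamma> s0 \<zeta> \<mu>h G D T \<pi> = eta r \<gamma> s0 T \<pi> - (L + Vm * measure_pmf.expectation \<rho> exc) / (1 - \<gamma>)"
    unfolding lb_eq L_def exc_def \<rho>_def by simp
  have sum_le: "L + Vm * measure_pmf.expectation \<rho> exc \<le>
      (Vm * \<epsilon> + 5 * gc * (Vm * \<epsilon>)) + Vm * \<epsilon>\<mu> + (dev + \<zeta> * Vm * TV \<mu>h \<nu> / 2)"
  proof -
    have "Vm * measure_pmf.expectation \<rho> exc \<le> Vm * (\<epsilon>\<mu> + 3 * gc * \<epsilon>)"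
      by (rule mult_left_mono[OF B3 Vm_nn])
    thus ?thesis using B2 by (simp add: algebra_simps)
  qed
  have d: "0 < 1 - \<gamma>" using g1 by simp
  have "(L + Vm * measure_pmf.expectation \<rho> exc) / (1 - \<gamma>) \<le>
      ((Vm * \<epsilon> + 5 * gc * (Vm * \<epsilon>)) + Vm * \<epsilon>\<mu> + (dev + \<zeta> * Vm * TV \<mu>h \<nu> / 2)) / (1 - \<gamma>)"
    by (rule divide_right_mono[OF sum_le]) (use d in simp)
  also have "\<dots> = (Vm * \<epsilon> / (1 - \<gamma>) + 5 * gc * (Vm * \<epsilon>) / (1 - \<gamma>)) + Vm * \<epsilon>\<mu> / (1 - \<gamma>) + (dev + \<zeta> * Vm * TV \<mu>h \<nu> / 2) / (1 - \<gamma>)"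
    by (simp add: add_divide_distrib)
  finally have X: "(L + Vm * measure_pmf.expectation \<rho> exc) / (1 - \<gamma>) \<le> (Vm * \<epsilon> / (1 - \<gamma>) + 5 * gc * (Vm * \<epsilon>) / (1 - \<gamma>)) + Vm * \<epsilon>\<mu> / (1 - \<gamma>) + (dev + \<zeta> * Vm * TV \<mu>h \<nu> / 2) / (1 - \<gamma>)" .
  have Y: "gc * (Vm * \<epsilon>) + Vm * \<epsilon> / (1 - \<gamma>) + 5 * gc * (Vm * \<epsilon>) / (1 - \<gamma>) \<le> 6 * (Vm * \<epsilon>) / (1 - \<gamma>)^2"
    unfolding gc_def by (rule arithB[OF g0 g1]) (use Vm_nn epsnn in simp)
  show ?thesis using B1 X Y lbq unfolding \<epsilon>\<mu>_def by (simp add: mult.assoc)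
qed

end

lemma exp_le_quad_neg:
  fixes u :: real assumes "u \<le> 0" shows "exp u \<le> 1 + u + u^2 / 2"
proof -
  let ?f = "\<lambda>x::real. 1 + x + x^2 / 2 - exp x"
  have "?f 0 \<le> ?f u"
  proof (rule DERIV_nonpos_imp_nonincreasing[OF assms])
    fix x :: real assume "u \<le> x" "x \<le> 0"
    have "DERIV ?f x :> 1 + x - exp x"
      by (auto intro!: derivative_eq_intros simp: power2_eq_square algebra_simps)
    moreover have "1 + x - exp x \<le> 0" using exp_ge_add_one_self[of x] by linarith
    ultimately show "\<exists>y. DERIV ?f x :> y \<and> y \<le> 0" by blast
  qed
  thus ?thesis by simp
qed

lemma fact_ge: "2 * 3 ^ n \<le> (fact (n + 2) :: real)"
proof (induction n)
  case 0 show ?case by simp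
next
  case (Suc n)
  have "(fact (Suc n + 2) :: real) = real (n + 3) * fact (n + 2)"
    by (simp add: algebra_simps)
  also have "\<dots> \<ge> 3 * (2 * 3 ^ n)"
    using Suc by (intro mult_mono) auto
  finally show ?case by simp
qed

lemma exp_le_pos:
  fixes u :: real assumes "0 \<le> u" "u < 3"
  shows "exp u \<le> 1 + u + u^2 / (2 * (1 - u / 3))"
proof -
  let ?a = "\<lambda>n. inverse (fact (n + 2)) *\<^sub>R (u ^ (n + 2))"
  let ?b = "\<lambda>n. u^2 / 2 * (u / 3) ^ n"
  have q: "norm (u / 3) < 1" using assms by simp
  have sb: "summable ?b" by (rule summable_mult[OF summable_geometric[OF q]])
  have ab: "?a n \<le> ?b n" for n
  proof -
    have "?a n = u^2 * u^n / fact (n + 2)" by (simp add: power_add field_simps power2_eq_square)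
    also have "\<dots> \<le> u^2 * u^n / (2 * 3^n)"
      by (rule divide_left_mono[OF fact_ge]) (use assms in auto)
    also have "\<dots> = ?b n" by (simp add: power_divide)
    finally show ?thesis .
  qed
  have a0: "0 \<le> ?a n" for n using assms by simp
  have sa: "summable ?a"
    by (rule summable_comparison_test'[OF sb]) (use ab a0 in auto)
  have "exp u = 1 + u + (\<Sum>n. ?a n)" by (rule exp_first_two_terms)
  also have "(\<Sum>n. ?a n) \<le> (\<Sum>n. ?b n)" by (rule suminf_le[OF ab sa sb])
  also have "(\<Sum>n. ?b n) = u^2 / 2 * (1 / (1 - u / 3))"
    using suminf_mult[OF summable_geometric[OF q], of "u^2/2"] suminf_geometric[OF q] by simp
  also have "\<dots> = u^2 / (2 * (1 - u / 3))" by simp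
  finally show ?thesis by simp
qed

lemma exp_le_bern:
  fixes u c :: real assumes "0 \<le> c" "c < 3" "u \<le> c"
  shows "exp u \<le> 1 + u + u^2 / (2 * (1 - c / 3))"
proof -
  have d: "0 < 1 - c / 3" "1 - c / 3 \<le> 1" using assms by auto
  show ?thesis
  proof (cases "u \<le> 0")
    case True
    have "u^2 / 2 \<le> u^2 / (2 * (1 - c / 3))"
      using d by (intro divide_left_mono) auto
    thus ?thesis using exp_le_quad_neg[OF True] by linarith
  next
    case False
    have d2: "0 < 1 - u / 3" "1 - c / 3 \<le> 1 - u / 3" using assms False by auto
    have "u^2 / (2 * (1 - u / 3)) \<le> u^2 / (2 * (1 - c / 3))"
      using d d2 by (intro divide_left_mono mult_pos_pos) auto
    thus ?thesis using exp_le_pos[of u] False assms by linarith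
  qed
qed

lemma iid_length: "xs \<in> set_pmf (iid n p) \<Longrightarrow> length xs = n"
  by (induction n arbitrary: xs) auto

lemma mgf_bound:
  fixes Y :: "'x \<Rightarrow> real"
  assumes EY: "measure_pmf.expectation p Y = 0" and Yb: "\<And>x. Y x \<le> b"
    and YB: "\<And>x. \<bar>Y x\<bar> \<le> B" and var: "measure_pmf.expectation p (\<lambda>x. (Y x)^2) \<le> \<sigma>2"
    and l: "0 \<le> l" "l * b < 3" "0 \<le> l * b"
  shows "measure_pmf.expectation p (\<lambda>x. exp (l * Y x)) \<le> exp (l^2 * \<sigma>2 / (2 * (1 - l * b / 3)))"
proof -
  let ?k = "2 * (1 - l * b / 3)"
  have k: "0 < ?k" using l by (simp add: mult.commute)
  have pw: "exp (l * Y x) \<le> 1 + l * Y x + l^2 / ?k * (Y x)^2" for x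
  proof -
    have "l * Y x \<le> l * b" by (rule mult_left_mono[OF Yb l(1)])
    from exp_le_bern[OF l(3) l(2) this] show ?thesis by (simp add: power_mult_distrib)
  qed
  have i1: "integrable (measure_pmf p) Y" by (rule integrable_bdd[OF YB])
  have YB2: "\<bar>(Y x)^2\<bar> \<le> B^2" for x using power_mono[OF YB[of x] abs_ge_zero, of 2] by simp
  have i2: "integrable (measure_pmf p) (\<lambda>x. (Y x)^2)" by (rule integrable_bdd[OF YB2])
  have Bnn: "0 \<le> B" using YB[of undefined] by linarith
  have "measure_pmf.expectation p (\<lambda>x. exp (l * Y x))
      \<le> measure_pmf.expectation p (\<lambda>x. 1 + l * Y x + l^2 / ?k * (Y x)^2)"
  proof (rule integral_mono[OF _ _ pw])
    show "integrable (measure_pmf p) (\<lambda>x. exp (l * Y x))"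
      by (rule integrable_bdd[where B="exp (l * B)"])
         (use YB l in \<open>auto intro!: mult_left_mono simp: abs_le_iff\<close>)
    show "integrable (measure_pmf p) (\<lambda>x. 1 + l * Y x + l^2 / ?k * (Y x)^2)"
      using i1 i2 by simp
  qed
  also have "\<dots> = 1 + l * measure_pmf.expectation p Y + l^2 / ?k * measure_pmf.expectation p (\<lambda>x. (Y x)^2)"
    using i1 i2 by simp
  also have "\<dots> \<le> 1 + l^2 / ?k * \<sigma>2"
  proof -
    have "0 \<le> l^2 / ?k" using k by simp
    hence "l^2 / ?k * measure_pmf.expectation p (\<lambda>x. (Y x)^2) \<le> l^2 / ?k * \<sigma>2"
      by (rule mult_left_mono[OF var])
    thus ?thesis using EY by simp
  qed
  also have "\<dots> \<le> exp (l^2 / ?k * \<sigma>2)" using exp_ge_add_one_self[of "l^2 / ?k * \<sigma>2"] by simp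
  finally show ?thesis by (simp add: field_simps)
qed

lemma nn_mgf_iid:
  fixes Y :: "'x \<Rightarrow> real"
  shows "(\<integral>\<^sup>+xs. ennreal (exp (l * sum_list (map Y xs))) \<partial>measure_pmf (iid n p))
       = (\<integral>\<^sup>+x. ennreal (exp (l * Y x)) \<partial>measure_pmf p) ^ n"
proof (induction n)
  case 0 show ?case by simp
next
  case (Suc n)
  have inner: "(\<integral>\<^sup>+xs. ennreal (exp (l * sum_list (map Y (x # xs)))) \<partial>measure_pmf (iid n p))
      = ennreal (exp (l * Y x)) * (\<integral>\<^sup>+x. ennreal (exp (l * Y x)) \<partial>measure_pmf p) ^ n" for x
  proof -
    have "(\<integral>\<^sup>+xs. ennreal (exp (l * sum_list (map Y (x # xs)))) \<partial>measure_pmf (iid n p))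
        = (\<integral>\<^sup>+xs. ennreal (exp (l * Y x)) * ennreal (exp (l * sum_list (map Y xs))) \<partial>measure_pmf (iid n p))"
      by (rule nn_integral_cong) (simp add: distrib_left exp_add ennreal_mult)
    also have "\<dots> = ennreal (exp (l * Y x)) * (\<integral>\<^sup>+xs. ennreal (exp (l * sum_list (map Y xs))) \<partial>measure_pmf (iid n p))"
      by (rule nn_integral_cmult) simp
    finally show ?thesis using Suc by simp
  qed
  have "(\<integral>\<^sup>+xs. ennreal (exp (l * sum_list (map Y xs))) \<partial>measure_pmf (iid (Suc n) p))
      = (\<integral>\<^sup>+x. (\<integral>\<^sup>+xs. ennreal (exp (l * sum_list (map Y (x # xs)))) \<partial>measure_pmf (iid n p)) \<partial>measure_pmf p)"
    by simp
  also have "\<dots> = (\<integral>\<^sup>+x. ennreal (exp (l * Y x)) * (\<integral>\<^sup>+x. ennreal (exp (l * Y x)) \<partial>measure_pmf p) ^ n \<partial>measure_pmf p)"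
    by (simp only: inner)
  also have "\<dots> = (\<integral>\<^sup>+x. ennreal (exp (l * Y x)) \<partial>measure_pmf p) * (\<integral>\<^sup>+x. ennreal (exp (l * Y x)) \<partial>measure_pmf p) ^ n"
    by (rule nn_integral_multc) simp
  finally show ?case by (simp add: mult.commute)
qed

lemma chernoff_iid:
  fixes Y :: "'x \<Rightarrow> real"
  assumes YB: "\<And>x. \<bar>Y x\<bar> \<le> B" and l: "0 \<le> l"
    and M: "measure_pmf.expectation p (\<lambda>x. exp (l * Y x)) \<le> M"
  shows "measure_pmf.prob (iid n p) {xs. a \<le> sum_list (map Y xs)} \<le> exp (- l * a) * M ^ n"
proof -
  let ?A = "{xs. a \<le> sum_list (map Y xs)}"
  let ?E = "measure_pmf.expectation p (\<lambda>x. exp (l * Y x))"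
  have ie: "integrable (measure_pmf p) (\<lambda>x. exp (l * Y x))"
    by (rule integrable_bdd[where B="exp (l * B)"])
       (use YB l in \<open>auto intro!: mult_left_mono simp: abs_le_iff\<close>)
  have Enn: "0 \<le> ?E" by (rule integral_nonneg_AE) simp
  have nnE: "(\<integral>\<^sup>+x. ennreal (exp (l * Y x)) \<partial>measure_pmf p) = ennreal ?E"
    by (rule nn_integral_eq_integral[OF ie]) simp
  have "emeasure (measure_pmf (iid n p)) ?A = (\<integral>\<^sup>+xs. indicator ?A xs \<partial>measure_pmf (iid n p))"
    by simp
  also have "\<dots> \<le> (\<integral>\<^sup>+xs. ennreal (exp (- l * a)) * ennreal (exp (l * sum_list (map Y xs))) \<partial>measure_pmf (iid n p))"
  proof (rule nn_integral_mono)
    fix xs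
    show "indicator ?A xs \<le> ennreal (exp (- l * a)) * ennreal (exp (l * sum_list (map Y xs)))"
    proof (cases "xs \<in> ?A")
      case True
      hence "0 \<le> l * (sum_list (map Y xs) - a)" using l by simp
      hence "1 \<le> exp (- l * a) * exp (l * sum_list (map Y xs))"
        by (simp add: exp_add[symmetric] algebra_simps)
      thus ?thesis using True by (simp add: ennreal_mult[symmetric] ennreal_1[symmetric] ennreal_leI del: ennreal_1)
    qed simp
  qed
  also have "\<dots> = ennreal (exp (- l * a)) * (\<integral>\<^sup>+xs. ennreal (exp (l * sum_list (map Y xs))) \<partial>measure_pmf (iid n p))"
    by (rule nn_integral_cmult) simp
  also have "\<dots> = ennreal (exp (- l * a)) * ennreal ?E ^ n" by (simp add: nn_mgf_iid nnE)
  also have "\<dots> = ennreal (exp (- l * a) * ?E ^ n)" using Enn by (simp add: ennreal_mult ennreal_power)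
  also have "\<dots> \<le> ennreal (exp (- l * a) * M ^ n)"
    using Enn M by (intro ennreal_leI mult_left_mono power_mono) auto
  finally have "ennreal (measure_pmf.prob (iid n p) ?A) \<le> ennreal (exp (- l * a) * M ^ n)"
    by (simp add: measure_pmf.emeasure_eq_measure)
  moreover have "0 \<le> exp (- l * a) * M ^ n"
  proof -
    have "0 \<le> M" using Enn M by linarith
    thus ?thesis by simp
  qed
  ultimately show ?thesis by (simp add: ennreal_le_iff)
qed

lemma bernstein_iid:
  fixes Y :: "'x \<Rightarrow> real"
  assumes EY: "measure_pmf.expectation p Y = 0" and Yb: "\<And>x. Y x \<le> b"
    and YB: "\<And>x. \<bar>Y x\<bar> \<le> B" and var: "measure_pmf.expectation p (\<lambda>x. (Y x)^2) \<le> \<sigma>2"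
    and s: "0 < \<sigma>2" and b: "0 < b" and t: "0 \<le> t"
  shows "measure_pmf.prob (iid n p) {xs. real n * t \<le> sum_list (map Y xs)}
     \<le> exp (- (real n * t^2 / (2 * (\<sigma>2 + b * t / 3))))"
proof -
  define D where "D = \<sigma>2 + b * t / 3"
  have D: "0 < D" using s b t by (simp add: D_def add_pos_nonneg)
  define l where "l = t / D"
  have l0: "0 \<le> l" using t D by (simp add: l_def)
  have lb0: "0 \<le> l * b" using l0 b by simp
  have lb3: "l * b < 3"
  proof -
    have "l * b = b * t / D" by (simp add: l_def)
    also have "\<dots> < 3" using D s unfolding D_def by (simp add: divide_less_eq)
    finally show ?thesis .
  qed
  have mgf: "measure_pmf.expectation p (\<lambda>x. exp (l * Y x)) \<le> exp (l^2 * \<sigma>2 / (2 * (1 - l * b / 3)))"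
    by (rule mgf_bound[OF EY Yb YB var l0 lb3 lb0])
  have "measure_pmf.prob (iid n p) {xs. real n * t \<le> sum_list (map Y xs)}
      \<le> exp (- l * (real n * t)) * exp (l^2 * \<sigma>2 / (2 * (1 - l * b / 3))) ^ n"
    by (rule chernoff_iid[OF YB l0 mgf])
  also have "\<dots> = exp (real n * (l^2 * \<sigma>2 / (2 * (1 - l * b / 3)) - l * t))"
    by (simp add: exp_of_nat_mult[symmetric] exp_add[symmetric] algebra_simps)
  also have "l^2 * \<sigma>2 / (2 * (1 - l * b / 3)) - l * t = - (t^2 / (2 * D))"
  proof -
    have "1 - l * b / 3 = \<sigma>2 / D" using D by (simp add: l_def D_def field_simps)
    hence "l^2 * \<sigma>2 / (2 * (1 - l * b / 3)) = l^2 * \<sigma>2 / (2 * (\<sigma>2 / D))" by simp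
    also have "\<dots> = l^2 * D / 2" using D s by (simp add: field_simps)
    also have "\<dots> = t^2 / (2 * D)" using D by (simp add: l_def power2_eq_square field_simps)
    finally have "l^2 * \<sigma>2 / (2 * (1 - l * b / 3)) = t^2 / (2 * D)" .
    moreover have "l * t = t^2 / D" by (simp add: l_def power2_eq_square)
    ultimately show ?thesis by simp
  qed
  finally show ?thesis by (simp add: D_def)
qed

lemma dev_choice:
  fixes \<sigma>2 b \<iota> :: real and n :: nat
  assumes "0 < \<sigma>2" "0 < b" "0 \<le> \<iota>" "0 < n"
  defines "dev \<equiv> sqrt (2 * \<sigma>2 * \<iota> / n) + 2 * b * \<iota> / (3 * n)"
  shows "\<iota> \<le> real n * dev^2 / (2 * (\<sigma>2 + b * dev / 3))"
proof -
  define A where "A = 2 * \<sigma>2 * \<iota> / n"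
  define Bq where "Bq = 2 * b * \<iota> / (3 * n)"
  have A0: "0 \<le> A" and B0: "0 \<le> Bq" using assms by (auto simp: A_def Bq_def)
  have dv: "dev = sqrt A + Bq" by (simp add: dev_def A_def Bq_def)
  have d0: "0 \<le> dev" using A0 B0 dv by simp
  have "dev^2 = A + 2 * Bq * sqrt A + Bq^2" using A0 by (simp add: dv power2_eq_square algebra_simps)
  also have "\<dots> \<ge> A + Bq * dev" using A0 B0 by (simp add: dv power2_eq_square algebra_simps)
  finally have "A + Bq * dev \<le> dev^2" .
  hence "real n * (A + Bq * dev) \<le> real n * dev^2" by (rule mult_left_mono) simp
  moreover have "real n * (A + Bq * dev) = 2 * \<iota> * (\<sigma>2 + b * dev / 3)"
    using assms by (simp add: A_def Bq_def field_simps)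
  ultimately have i1: "2 * \<iota> * (\<sigma>2 + b * dev / 3) \<le> real n * dev^2" by simp
  define X where "X = \<sigma>2 + b * dev / 3"
  have pos: "0 < 2 * X" using assms d0 by (simp add: add_pos_nonneg X_def)
  have eq: "\<iota> * (2 * X) = 2 * \<iota> * X" by (simp add: mult_ac)
  have i1': "2 * \<iota> * X \<le> real n * dev^2" using i1 by (simp only: X_def)
  have "\<iota> * (2 * X) \<le> real n * dev^2" by (subst eq) (rule i1')
  thus ?thesis using pos unfolding X_def[symmetric] by (simp only: pos_le_divide_eq)
qed

lemma sum_list_shift: "sum_list (map (\<lambda>z. f z - c) xs) = sum_list (map f xs) - real (length xs) * (c::real)"
  by (induction xs) (auto simp: algebra_simps)

context setting begin

lemma mean_eq: "mean D g T \<pi> = sum_list (map (Xf g T \<pi>) D) / real (length D)"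
  by (simp add: mean_def Xf_def)

lemma EXX_abs: "g \<in> G \<Longrightarrow> \<bar>EXX g T \<pi>\<bar> \<le> \<zeta> * Vm"
  unfolding EXX_def by (rule exp_bounded[OF Xf_abs])

lemma Xf_sq:
  assumes g: "g \<in> G"
  shows "measure_pmf.expectation \<mu> (\<lambda>z. (Xf g T \<pi> z)^2) \<le> \<zeta> * Vm^2 * (1 + \<zeta> * TV \<mu>h \<nu> / 2)"
proof -
  define w where "w = W \<pi> T"
  have z: "0 \<le> \<zeta>" using z0 by simp
  have wnn: "0 \<le> w x" and wle: "w x \<le> \<zeta>" and wabs: "\<bar>w x\<bar> \<le> \<zeta>" for x
    unfolding w_def by (rule W_nn, rule W_le, rule W_abs)
  define pr where "pr = (\<lambda>(s::'s, a::'a, s'::'s). (s, a))"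
  have pw: "(Xf g T \<pi> z)^2 \<le> \<zeta> * Vm^2 * w (pr z)" for z
  proof -
    obtain s a s' where zz: "z = (s, a, s')" by (cases z)
    have "0 \<le> fT T g s a" "fT T g s a \<le> Vm" "0 \<le> g s'" "g s' \<le> Vm"
      by (rule fT_nn[OF g] fT_le[OF g] g_nn[OF g] g_le[OF g])+
    hence d: "\<bar>fT T g s a - g s'\<bar> \<le> Vm" by (simp add: abs_le_iff)
    have d2: "(fT T g s a - g s')^2 \<le> Vm^2"
      using power_mono[OF d abs_ge_zero, of 2] by simp
    have w2: "(w (s, a))^2 \<le> \<zeta> * w (s, a)"
      using mult_right_mono[OF wle[of "(s, a)"] wnn[of "(s, a)"]] by (simp add: power2_eq_square)
    have "(Xf g T \<pi> z)^2 = (w (s, a))^2 * (fT T g s a - g s')^2"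
      by (simp add: zz Xf_def w_def power_mult_distrib)
    also have "\<dots> \<le> (\<zeta> * w (s, a)) * Vm^2"
      by (rule mult_mono[OF w2 d2]) (use z wnn in auto)
    finally show ?thesis by (simp add: zz pr_def mult_ac)
  qed
  have XB: "\<bar>(Xf g T \<pi> z)^2\<bar> \<le> (\<zeta> * Vm)^2" for z
    using power_mono[OF Xf_abs[OF g, of T \<pi> z] abs_ge_zero, of 2] by simp
  have wB: "\<bar>\<zeta> * Vm^2 * w (pr z)\<bar> \<le> \<zeta> * Vm^2 * \<zeta>" for z
    using wabs[of "pr z"] z by (simp add: abs_mult mult_left_mono)
  have "measure_pmf.expectation \<mu> (\<lambda>z. (Xf g T \<pi> z)^2) \<le> measure_pmf.expectation \<mu> (\<lambda>z. \<zeta> * Vm^2 * w (pr z))"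
    by (rule exp_mono_bdd[OF XB wB pw])
  also have "\<dots> = \<zeta> * Vm^2 * measure_pmf.expectation \<nu> w"
    by (simp add: sa_marg_def pr_def)
  also have "measure_pmf.expectation \<nu> w \<le> 1 + \<zeta> * TV \<mu>h \<nu> / 2"
  proof -
    have h1: "measure_pmf.expectation \<nu> w - measure_pmf.expectation \<mu>h w \<le> \<zeta> / 2 * TV \<nu> \<mu>h"
      by (rule TV_half[OF wnn wle])
    have "measure_pmf.expectation \<mu>h (\<lambda>x. w x * 1) \<le> measure_pmf.expectation (rhoP s0 T \<pi>) (\<lambda>x. 1)"
      unfolding w_def W_eq by (rule exp_split_le[OF z]) auto
    hence h2: "measure_pmf.expectation \<mu>h w \<le> 1" by simp
    show ?thesis using h1 h2 by (simp add: TV_sym)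
  qed
  hence "\<zeta> * Vm^2 * measure_pmf.expectation \<nu> w \<le> \<zeta> * Vm^2 * (1 + \<zeta> * TV \<mu>h \<nu> / 2)"
    by (rule mult_left_mono) (use z in simp)
  finally show ?thesis .
qed

lemma conc_triple:
  assumes g: "g \<in> G" and Vp: "0 < Vm" and dev0: "0 \<le> dev" and n0: "0 < n"
  defines "\<sigma>2 \<equiv> \<zeta> * Vm^2 * (1 + \<zeta> * TV \<mu>h \<nu> / 2)" and "b \<equiv> 2 * \<zeta> * Vm"
  shows "measure_pmf.prob (iid n \<mu>) {D. length D = n \<and> dev < \<bar>mean D g T \<pi> - EXX g T \<pi>\<bar>}
     \<le> 2 * exp (- (real n * dev^2 / (2 * (\<sigma>2 + b * dev / 3))))"
proof -
  define E where "E = EXX g T \<pi>"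
  define Y where "Y = (\<lambda>z. Xf g T \<pi> z - E)"
  define Y' where "Y' = (\<lambda>z. - Y z)"
  have s: "0 < \<sigma>2" using z0 Vp TV_nn[of \<mu>h \<nu>] unfolding \<sigma>2_def
    by (intro mult_pos_pos) (auto intro: add_pos_nonneg)
  have b: "0 < b" using z0 Vp by (simp add: b_def)
  have Xa: "\<bar>Xf g T \<pi> z\<bar> \<le> \<zeta> * Vm" for z by (rule Xf_abs[OF g])
  have Ea: "\<bar>E\<bar> \<le> \<zeta> * Vm" unfolding E_def by (rule EXX_abs[OF g])
  have YB: "\<bar>Y z\<bar> \<le> b" for z using Xa[of z] Ea unfolding Y_def b_def by linarith
  have Y'B: "\<bar>Y' z\<bar> \<le> b" for z using YB[of z] unfolding Y'_def by simp
  have Yb: "Y z \<le> b" for z using YB[of z] by linarith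
  have Y'b: "Y' z \<le> b" for z using Y'B[of z] by linarith
  have iX: "integrable (measure_pmf \<mu>) (Xf g T \<pi>)" by (rule integrable_bdd[OF Xa])
  have iX2: "integrable (measure_pmf \<mu>) (\<lambda>z. (Xf g T \<pi> z)^2)"
  proof (rule integrable_bdd[where B="(\<zeta> * Vm)^2"])
    fix z show "\<bar>(Xf g T \<pi> z)^2\<bar> \<le> (\<zeta> * Vm)^2" using power_mono[OF Xa[of z] abs_ge_zero, of 2] by simp
  qed
  have EY: "measure_pmf.expectation \<mu> Y = 0" unfolding Y_def E_def EXX_def using iX by simp
  have EY': "measure_pmf.expectation \<mu> Y' = 0" unfolding Y'_def using EY by simp
  have EY2: "measure_pmf.expectation \<mu> (\<lambda>z. (Y z)^2) \<le> \<sigma>2"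
  proof -
    have "measure_pmf.expectation \<mu> (\<lambda>z. (Y z)^2)
        = measure_pmf.expectation \<mu> (\<lambda>z. (Xf g T \<pi> z)^2 - 2 * E * Xf g T \<pi> z + E^2)"
      unfolding Y_def by (simp add: power2_diff algebra_simps)
    also have "\<dots> = measure_pmf.expectation \<mu> (\<lambda>z. (Xf g T \<pi> z)^2) - 2 * E * E + E^2"
      using iX iX2 by (simp add: E_def EXX_def)
    also have "\<dots> \<le> measure_pmf.expectation \<mu> (\<lambda>z. (Xf g T \<pi> z)^2)" by (simp add: power2_eq_square)
    also have "\<dots> \<le> \<sigma>2" unfolding \<sigma>2_def by (rule Xf_sq[OF g])
    finally show ?thesis .
  qed
  have EY'2: "measure_pmf.expectation \<mu> (\<lambda>z. (Y' z)^2) \<le> \<sigma>2" using EY2 by (simp add: Y'_def)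
  have sub: "{D. length D = n \<and> dev < \<bar>mean D g T \<pi> - EXX g T \<pi>\<bar>}
      \<subseteq> {D. real n * dev \<le> sum_list (map Y D)} \<union> {D. real n * dev \<le> sum_list (map Y' D)}"
  proof
    fix D assume "D \<in> {D. length D = n \<and> dev < \<bar>mean D g T \<pi> - EXX g T \<pi>\<bar>}"
    hence len: "length D = n" and lt: "dev < \<bar>mean D g T \<pi> - E\<bar>" by (auto simp: E_def)
    have sY: "sum_list (map Y D) = real n * (mean D g T \<pi> - E)"
      unfolding Y_def sum_list_shift mean_eq len using n0 by (simp add: field_simps)
    have sY': "sum_list (map Y' D) = - sum_list (map Y D)"
      unfolding Y'_def by (induction D) auto
    have nd: "real n * dev \<le> real n * \<bar>mean D g T \<pi> - E\<bar>" using lt by (intro mult_left_mono) auto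
    show "D \<in> {D. real n * dev \<le> sum_list (map Y D)} \<union> {D. real n * dev \<le> sum_list (map Y' D)}"
    proof (cases "E \<le> mean D g T \<pi>")
      case True
      hence "\<bar>mean D g T \<pi> - E\<bar> = mean D g T \<pi> - E" by simp
      thus ?thesis using nd sY by simp
    next
      case False
      hence "\<bar>mean D g T \<pi> - E\<bar> = E - mean D g T \<pi>" by simp
      moreover have "sum_list (map Y' D) = real n * (E - mean D g T \<pi>)" using sY sY' by (simp add: algebra_simps)
      ultimately show ?thesis using nd by simp
    qed
  qed
  have "measure_pmf.prob (iid n \<mu>) {D. length D = n \<and> dev < \<bar>mean D g T \<pi> - EXX g T \<pi>\<bar>}
      \<le> measure_pmf.prob (iid n \<mu>) ({D. real n * dev \<le> sum_list (map Y D)} \<union> {D. real n * dev \<le> sum_list (map Y' D)})"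
    by (rule measure_pmf.finite_measure_mono[OF sub]) simp
  also have "\<dots> \<le> measure_pmf.prob (iid n \<mu>) {D. real n * dev \<le> sum_list (map Y D)}
      + measure_pmf.prob (iid n \<mu>) {D. real n * dev \<le> sum_list (map Y' D)}"
    by (rule measure_subadditive) (simp_all add: measure_pmf.emeasure_eq_measure)
  also have "\<dots> \<le> exp (- (real n * dev^2 / (2 * (\<sigma>2 + b * dev / 3))))
      + exp (- (real n * dev^2 / (2 * (\<sigma>2 + b * dev / 3))))"
    by (intro add_mono bernstein_iid[OF EY Yb YB EY2 s b dev0] bernstein_iid[OF EY' Y'b Y'B EY'2 s b dev0])
  finally show ?thesis by simp
qed

end

lemma finite_INF_attained:
  fixes f :: "'x \<Rightarrow> real"
  assumes "finite A" "A \<noteq> {}"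
  shows "\<exists>x\<in>A. f x = (INF x\<in>A. f x)"
proof -
  have "(INF x\<in>A. f x) = Min (f ` A)" using assms by (simp add: cInf_eq_Min)
  moreover have "Min (f ` A) \<in> f ` A" using assms by (intro Min_in) auto
  ultimately show ?thesis by auto
qed

lemma lin_comb:
  fixes Lb X1 E S X2 X3 X4 a b c d e :: real
  shows "Lb - X1 \<le> E \<Longrightarrow> S \<le> Lb + X2 \<Longrightarrow> X3 \<le> X4 \<Longrightarrow> X1 = a + b + c \<Longrightarrow> X2 = a + c / 2
    \<Longrightarrow> X3 = 2 * a + 3 / 2 * c \<Longrightarrow> X4 = d + 2 * c \<Longrightarrow> e = 2 * c \<Longrightarrow> S - b - d - e \<le> E"
  by linarith

context setting begin

lemma det:
  fixes TT :: "('s,'a) kernel set" and PP :: "('s,'a) policy set"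
  assumes TT: "finite TT" "TT \<noteq> {}" and PP: "finite PP" "PP \<noteq> {}"
    and good: "\<forall>g\<in>G. \<forall>T\<in>TT. \<forall>\<pi>\<in>PP. \<bar>mean D g T \<pi> - EXX g T \<pi>\<bar> \<le> dev"
    and c1: "\<pi>h \<in> PP"
    and c2: "\<forall>\<pi>\<in>PP. (MAX T\<in>TT. lb r \<gamma> s0 \<zeta> \<mu>h G D T \<pi>) \<le> (MAX T\<in>TT. lb r \<gamma> s0 \<zeta> \<mu>h G D T \<pi>h)"
    and c3: "Th \<in> TT" and c4: "\<forall>T\<in>TT. lb r \<gamma> s0 \<zeta> \<mu>h G D T \<pi>h \<le> lb r \<gamma> s0 \<zeta> \<mu>h G D Th \<pi>h"
    and key: "2 * dev \<le> 4 * Vm * x + \<zeta> * Vm * TV \<mu>h \<nu> / 2"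
  shows "eta r \<gamma> s0 Tstar \<pi>h \<ge>
           (SUP \<pi>\<in>PP. eta r \<gamma> s0 Tstar \<pi>
              - 6 * Vm * eps_rho \<gamma> s0 Tstar TT \<pi> / (1 - \<gamma>)^2
              - Vm * eps_mu \<gamma> s0 \<zeta> \<mu>h Tstar \<pi> / (1 - \<gamma>))
           - eps_V r \<gamma> s0 \<zeta> \<mu>h \<mu> Tstar G Th \<pi>h / (1 - \<gamma>)
           - 4 * Vm / (1 - \<gamma>) * x
           - 2 * \<zeta> * Vm * TV \<mu>h \<nu> / (1 - \<gamma>)"
proof -
  define eV where "eV = eps_V r \<gamma> s0 \<zeta> \<mu>h \<mu> Tstar G Th \<pi>h"
  define tv where "tv = \<zeta> * Vm * TV \<mu>h \<nu>"
  define E where "E = eta r \<gamma> s0 Tstar \<pi>h"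
  define F where "F = (\<lambda>gA. \<bar>measure_pmf.expectation \<nu> (\<lambda>(s, a). w_pol \<gamma> s0 \<zeta> \<mu>h \<pi>h Th (s, a) *
           (measure_pmf.expectation (Th s a) (\<lambda>s'. gA s' - Vfun r \<gamma> Tstar \<pi>h s')
            - measure_pmf.expectation (Tstar s a) (\<lambda>s'. gA s' - Vfun r \<gamma> Tstar \<pi>h s')))\<bar>)"
  have eVF: "eps_V r \<gamma> s0 \<zeta> \<mu>h \<mu> Tstar G Th \<pi>h = (INF g\<in>G. F g)"
    unfolding eps_V_def F_def ..
  obtain gA where gA: "gA \<in> G" and FgA: "F gA = (INF g\<in>G. F g)"
    using finite_INF_attained[OF Gfin Gne, of F] by blast
  have eVg: "eps_V r \<gamma> s0 \<zeta> \<mu>h \<mu> Tstar G Th \<pi>h = \<bar>measure_pmf.expectation \<nu> (\<lambda>(s, a). w_pol \<gamma> s0 \<zeta> \<mu>h \<pi>h Th (s, a) *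
           (measure_pmf.expectation (Th s a) (\<lambda>s'. gA s' - Vfun r \<gamma> Tstar \<pi>h s')
            - measure_pmf.expectation (Tstar s a) (\<lambda>s'. gA s' - Vfun r \<gamma> Tstar \<pi>h s')))\<bar>"
  proof -
    have "eps_V r \<gamma> s0 \<zeta> \<mu>h \<mu> Tstar G Th \<pi>h = F gA" using eVF FgA by simp
    thus ?thesis unfolding F_def .
  qed
  have A: "lb r \<gamma> s0 \<zeta> \<mu>h G D Th \<pi>h - (dev + eV + tv) / (1 - \<gamma>) \<le> E"
    unfolding eV_def tv_def E_def
    by (rule sideA[OF gA eVg]) (use good gA c1 c3 in blast)
  have mx: "(MAX T\<in>TT. lb r \<gamma> s0 \<zeta> \<mu>h G D T \<pi>h) \<le> lb r \<gamma> s0 \<zeta> \<mu>h G D Th \<pi>h"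
    using TT c4 by (simp add: Max_le_iff)
  have each: "eta r \<gamma> s0 Tstar \<pi> - 6 * Vm * eps_rho \<gamma> s0 Tstar TT \<pi> / (1 - \<gamma>)^2
              - Vm * eps_mu \<gamma> s0 \<zeta> \<mu>h Tstar \<pi> / (1 - \<gamma>)
      \<le> lb r \<gamma> s0 \<zeta> \<mu>h G D Th \<pi>h + (dev + tv / 2) / (1 - \<gamma>)" if \<pi>: "\<pi> \<in> PP" for \<pi>
  proof -
    define FT where "FT = (\<lambda>T. occ_exp (occ \<gamma> s0 Tstar \<pi>) (\<lambda>(s, a). TV (T s a) (Tstar s a)))"
    obtain T where T: "T \<in> TT" and FT: "FT T = (INF T\<in>TT. FT T)"
      using finite_INF_attained[OF TT, of FT] by blast
    have eT: "occ_exp (occ \<gamma> s0 Tstar \<pi>) (\<lambda>(s, a). TV (T s a) (Tstar s a)) = eps_rho \<gamma> s0 Tstar TT \<pi>"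
      using FT unfolding FT_def eps_rho_def .
    have B: "eta r \<gamma> s0 Tstar \<pi> - 6 * Vm * eps_rho \<gamma> s0 Tstar TT \<pi> / (1 - \<gamma>)^2
          - Vm * eps_mu \<gamma> s0 \<zeta> \<mu>h Tstar \<pi> / (1 - \<gamma>)
          - (dev + \<zeta> * Vm * TV \<mu>h \<nu> / 2) / (1 - \<gamma>) \<le> lb r \<gamma> s0 \<zeta> \<mu>h G D T \<pi>"
      by (rule sideB[OF _ eT[symmetric]]) (use good T \<pi> in blast)
    have "lb r \<gamma> s0 \<zeta> \<mu>h G D T \<pi> \<le> (MAX T\<in>TT. lb r \<gamma> s0 \<zeta> \<mu>h G D T \<pi>)"
      using TT T by (intro Max_ge) auto
    also have "\<dots> \<le> (MAX T\<in>TT. lb r \<gamma> s0 \<zeta> \<mu>h G D T \<pi>h)" using c2 \<pi> by blast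
    also note mx
    finally show ?thesis using B unfolding tv_def by (simp add: mult.assoc)
  qed
  have sup: "(SUP \<pi>\<in>PP. eta r \<gamma> s0 Tstar \<pi> - 6 * Vm * eps_rho \<gamma> s0 Tstar TT \<pi> / (1 - \<gamma>)^2
              - Vm * eps_mu \<gamma> s0 \<zeta> \<mu>h Tstar \<pi> / (1 - \<gamma>))
      \<le> lb r \<gamma> s0 \<zeta> \<mu>h G D Th \<pi>h + (dev + tv / 2) / (1 - \<gamma>)"
    by (rule cSUP_least[OF PP(2)]) (rule each)
  have d: "0 < 1 - \<gamma>" using g1 by simp
  have k2: "(2 * dev + (3/2) * tv) / (1 - \<gamma>) \<le> (4 * Vm * x + 2 * tv) / (1 - \<gamma>)"
    by (rule divide_right_mono) (use key d in \<open>auto simp: tv_def\<close>)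
  have split1: "(dev + eV + tv) / (1 - \<gamma>) = dev / (1 - \<gamma>) + eV / (1 - \<gamma>) + tv / (1 - \<gamma>)"
    by (simp add: add_divide_distrib)
  have split2: "(dev + tv / 2) / (1 - \<gamma>) = dev / (1 - \<gamma>) + (tv / (1 - \<gamma>)) / 2"
    by (simp add: add_divide_distrib)
  have split3: "(2 * dev + (3/2) * tv) / (1 - \<gamma>) = 2 * (dev / (1 - \<gamma>)) + (3/2) * (tv / (1 - \<gamma>))"
    by (simp add: add_divide_distrib)
  have split4: "(4 * Vm * x + 2 * tv) / (1 - \<gamma>) = 4 * Vm / (1 - \<gamma>) * x + 2 * (tv / (1 - \<gamma>))"
    by (simp add: add_divide_distrib)
  have split5: "2 * \<zeta> * Vm * TV \<mu>h \<nu> / (1 - \<gamma>) = 2 * (tv / (1 - \<gamma>))" by (simp add: tv_def)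
  show ?thesis
    unfolding E_def[symmetric] eV_def[symmetric] by (rule lin_comb[OF A sup k2 split1 split2 split3 split4 split5])
qed

end

lemma dev_alg:
  fixes Vm \<zeta> \<iota> u :: real and n :: nat
  assumes Vm: "0 \<le> Vm" and z: "0 < \<zeta>" and i: "0 \<le> \<iota>" and n: "0 < n" and u: "0 \<le> u"
    and xs: "sqrt (\<zeta> * \<iota> / n) \<le> 1/4"
  shows "2 * (sqrt (2 * (\<zeta> * Vm^2 * (1 + u / 2)) * \<iota> / n) + 2 * (2 * \<zeta> * Vm) * \<iota> / (3 * n))
     \<le> 4 * Vm * sqrt (\<zeta> * \<iota> / n) + Vm * u / 2"
proof -
  define y where "y = \<zeta> * \<iota> / n"
  define x where "x = sqrt y"
  have y0: "0 \<le> y" unfolding y_def using z i n by (intro divide_nonneg_nonneg mult_nonneg_nonneg) auto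
  have x0: "0 \<le> x" using y0 by (simp add: x_def)
  have xx: "x^2 = y" using y0 by (simp add: x_def)
  have x4: "x \<le> 1/4" using xs by (simp add: x_def y_def)
  have e1: "2 * (\<zeta> * Vm^2 * (1 + u / 2)) * \<iota> / n = Vm^2 * y * (2 + u)"
    using n by (simp add: y_def field_simps)
  have s1: "sqrt (Vm^2 * y * (2 + u)) = Vm * x * sqrt (2 + u)"
    using Vm u by (simp add: real_sqrt_mult x_def)
  have s2: "sqrt (2 + u) \<le> 3/2 + u/3"
  proof -
    have "2 + u \<le> (3/2 + u/3)^2" using u by (simp add: power2_eq_square field_simps)
    hence "sqrt (2 + u) \<le> sqrt ((3/2 + u/3)^2)" by (rule real_sqrt_le_mono)
    thus ?thesis using u by simp
  qed
  have e2: "2 * (2 * \<zeta> * Vm) * \<iota> / (3 * n) = 4/3 * Vm * y" using n by (simp add: y_def field_simps)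
  have "2 * (sqrt (2 * (\<zeta> * Vm^2 * (1 + u / 2)) * \<iota> / n) + 2 * (2 * \<zeta> * Vm) * \<iota> / (3 * n))
      = 2 * (Vm * x) * sqrt (2 + u) + 8/3 * Vm * x^2"
    unfolding e1 s1 e2 xx by simp
  also have "\<dots> \<le> 2 * (Vm * x) * (3/2 + u/3) + 8/3 * Vm * x^2"
    using s2 Vm x0 by (intro add_mono mult_left_mono) auto
  also have "\<dots> \<le> 4 * Vm * x + Vm * u / 2"
  proof -
    have a: "0 \<le> Vm * (x * (1 - 8/3 * x))" using Vm x0 x4 by (intro mult_nonneg_nonneg) auto
    have b: "0 \<le> Vm * (u * (1/2 - 2/3 * x))" using Vm u x4 by (intro mult_nonneg_nonneg) auto
    show ?thesis using a b by (simp add: algebra_simps power2_eq_square)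
  qed
  finally show ?thesis by (simp add: x_def y_def)
qed

context setting begin

lemma main:
  fixes TT :: "('s,'a) kernel set" and PP :: "('s,'a) policy set" and \<delta> :: real and n :: nat
  assumes d0: "0 < \<delta>" and d1: "\<delta> < 1" and n0: "0 < n"
    and TTf: "finite TT" and TTne: "TT \<noteq> {}" and PPf: "finite PP" and PPne: "PP \<noteq> {}"
  shows "measure_pmf.prob (iid n \<mu>)
     {D. \<forall>\<pi>h Th.
          (\<pi>h \<in> PP \<and> (\<forall>\<pi>\<in>PP. (MAX T\<in>TT. lb r \<gamma> s0 \<zeta> \<mu>h G D T \<pi>)
                                 \<le> (MAX T\<in>TT. lb r \<gamma> s0 \<zeta> \<mu>h G D T \<pi>h))
           \<and> Th \<in> TT \<and> (\<forall>T\<in>TT. lb r \<gamma> s0 \<zeta> \<mu>h G D T \<pi>h \<le> lb r \<gamma> s0 \<zeta> \<mu>h G D Th \<pi>h))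
          \<longrightarrow> eta r \<gamma> s0 Tstar \<pi>h \<ge>
                (SUP \<pi>\<in>PP. eta r \<gamma> s0 Tstar \<pi>
                   - 6 * Vmax r \<gamma> * eps_rho \<gamma> s0 Tstar TT \<pi> / (1 - \<gamma>)^2
                   - Vmax r \<gamma> * eps_mu \<gamma> s0 \<zeta> \<mu>h Tstar \<pi> / (1 - \<gamma>))
                - eps_V r \<gamma> s0 \<zeta> \<mu>h \<mu> Tstar G Th \<pi>h / (1 - \<gamma>)
                - 4 * Vmax r \<gamma> / (1 - \<gamma>)
                    * sqrt (\<zeta> * ln (2 * real (card G) * real (card TT) * real (card PP) / \<delta>) / real n)
                - 2 * \<zeta> * Vmax r \<gamma> * TV \<mu>h (sa_marg \<mu>) / (1 - \<gamma>)}
   \<ge> 1 - \<delta>"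
proof -
  define S where "S = {D. \<forall>\<pi>h Th.
          (\<pi>h \<in> PP \<and> (\<forall>\<pi>\<in>PP. (MAX T\<in>TT. lb r \<gamma> s0 \<zeta> \<mu>h G D T \<pi>)
                                 \<le> (MAX T\<in>TT. lb r \<gamma> s0 \<zeta> \<mu>h G D T \<pi>h))
           \<and> Th \<in> TT \<and> (\<forall>T\<in>TT. lb r \<gamma> s0 \<zeta> \<mu>h G D T \<pi>h \<le> lb r \<gamma> s0 \<zeta> \<mu>h G D Th \<pi>h))
          \<longrightarrow> eta r \<gamma> s0 Tstar \<pi>h \<ge>
                (SUP \<pi>\<in>PP. eta r \<gamma> s0 Tstar \<pi>
                   - 6 * Vmax r \<gamma> * eps_rho \<gamma> s0 Tstar TT \<pi> / (1 - \<gamma>)^2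
                   - Vmax r \<gamma> * eps_mu \<gamma> s0 \<zeta> \<mu>h Tstar \<pi> / (1 - \<gamma>))
                - eps_V r \<gamma> s0 \<zeta> \<mu>h \<mu> Tstar G Th \<pi>h / (1 - \<gamma>)
                - 4 * Vmax r \<gamma> / (1 - \<gamma>)
                    * sqrt (\<zeta> * ln (2 * real (card G) * real (card TT) * real (card PP) / \<delta>) / real n)
                - 2 * \<zeta> * Vmax r \<gamma> * TV \<mu>h (sa_marg \<mu>) / (1 - \<gamma>)}"
  define N where "N = real (card G) * real (card TT) * real (card PP)"
  define \<iota> where "\<iota> = ln (2 * real (card G) * real (card TT) * real (card PP) / \<delta>)"
  define x where "x = sqrt (\<zeta> * \<iota> / real n)"
  have cG: "1 \<le> real (card G)" using Gfin Gne by (simp add: Suc_leI card_gt_0_iff)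
  have cT: "1 \<le> real (card TT)" using TTf TTne by (simp add: Suc_leI card_gt_0_iff)
  have cP: "1 \<le> real (card PP)" using PPf PPne by (simp add: Suc_leI card_gt_0_iff)
  have N1: "1 \<le> N" unfolding N_def using cG cT cP
    by (metis mult_mono' mult_1 order.trans zero_le_one)
  have arg: "1 < 2 * N / \<delta>" using N1 d0 d1 by (simp add: field_simps)
  have i0: "0 < \<iota>" unfolding \<iota>_def using arg by (simp add: N_def mult.assoc)
  have x0: "0 \<le> x" unfolding x_def using z0 i0 n0 by simp
  have z: "0 \<le> \<zeta>" using z0 by simp
  have TVn: "0 \<le> TV \<mu>h \<nu>" by (rule TV_nn)
  have epsV_nn: "0 \<le> eps_V r \<gamma> s0 \<zeta> \<mu>h \<mu> Tstar G T \<pi>" for T \<pi>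
    unfolding eps_V_def by (rule cINF_greatest[OF Gne]) simp
  have epsrho_nn: "0 \<le> eps_rho \<gamma> s0 Tstar TT \<pi>" for \<pi>
    unfolding eps_rho_def
  proof (rule cINF_greatest[OF TTne])
    fix T
    have b: "\<bar>(\<lambda>(s, a). TV (T s a) (Tstar s a)) y\<bar> \<le> 2" for y by (cases y) (simp add: TV_nn TV_le2)
    have "0 \<le> measure_pmf.expectation (rhoP s0 Tstar \<pi>) (\<lambda>(s, a). TV (T s a) (Tstar s a))"
      by (rule exp_lb[OF _ b]) (auto simp: TV_nn)
    thus "0 \<le> occ_exp (occ \<gamma> s0 Tstar \<pi>) (\<lambda>(s, a). TV (T s a) (Tstar s a))"
      by (subst occ_exp_rho[OF b])
  qed
  have epsmu_nn: "0 \<le> eps_mu \<gamma> s0 \<zeta> \<mu>h Tstar \<pi>" for \<pi>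
  proof -
    have b: "\<bar>(\<lambda>x. if ratio_exceeds (\<zeta> / 2) (occ \<gamma> s0 Tstar \<pi>) \<mu>h x then 1 else (0::real)) y\<bar> \<le> 1" for y by simp
    have "0 \<le> measure_pmf.expectation (rhoP s0 Tstar \<pi>) (\<lambda>x. if ratio_exceeds (\<zeta> / 2) (occ \<gamma> s0 Tstar \<pi>) \<mu>h x then 1 else (0::real))"
      by (rule exp_lb[OF _ b]) auto
    thus ?thesis unfolding eps_mu_def by (subst occ_exp_rho[OF b])
  qed
  have eta_nn: "0 \<le> eta r \<gamma> s0 T \<pi>" for T \<pi> unfolding eta_def by (rule V_nn)
  have eta_le: "eta r \<gamma> s0 T \<pi> \<le> Vm" for T \<pi> unfolding eta_def by (rule V_le)
  have d: "0 < 1 - \<gamma>" using g1 by simp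
  have SUP_le: "(SUP \<pi>\<in>PP. eta r \<gamma> s0 Tstar \<pi>
                   - 6 * Vmax r \<gamma> * eps_rho \<gamma> s0 Tstar TT \<pi> / (1 - \<gamma>)^2
                   - Vmax r \<gamma> * eps_mu \<gamma> s0 \<zeta> \<mu>h Tstar \<pi> / (1 - \<gamma>)) \<le> Vm"
  proof (rule cSUP_least[OF PPne])
    fix \<pi>
    have "0 \<le> 6 * Vmax r \<gamma> * eps_rho \<gamma> s0 Tstar TT \<pi> / (1 - \<gamma>)^2"
      using Vm_nn epsrho_nn[of \<pi>] by simp
    moreover have "0 \<le> Vmax r \<gamma> * eps_mu \<gamma> s0 \<zeta> \<mu>h Tstar \<pi> / (1 - \<gamma>)"
      using Vm_nn epsmu_nn[of \<pi>] d by simp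
    ultimately show "eta r \<gamma> s0 Tstar \<pi> - 6 * Vmax r \<gamma> * eps_rho \<gamma> s0 Tstar TT \<pi> / (1 - \<gamma>)^2
                   - Vmax r \<gamma> * eps_mu \<gamma> s0 \<zeta> \<mu>h Tstar \<pi> / (1 - \<gamma>) \<le> Vm"
      using eta_le[of Tstar \<pi>] by linarith
  qed
  show ?thesis
  proof (cases "Vm = 0 \<or> 1 - \<gamma> \<le> 4 * x")
    case True
    have "D \<in> S" for D
      unfolding S_def
    proof (intro CollectI allI impI)
      fix \<pi>h Th
      have t1: "0 \<le> eps_V r \<gamma> s0 \<zeta> \<mu>h \<mu> Tstar G Th \<pi>h / (1 - \<gamma>)" using epsV_nn d by simp
      have t2: "0 \<le> 2 * \<zeta> * Vmax r \<gamma> * TV \<mu>h (sa_marg \<mu>) / (1 - \<gamma>)" using z Vm_nn TVn d by simp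
      have t3: "Vm \<le> 4 * Vm / (1 - \<gamma>) * x"
        using True
      proof
        assume "Vm = 0" thus ?thesis by simp
      next
        assume a: "1 - \<gamma> \<le> 4 * x"
        have "1 \<le> 4 * x / (1 - \<gamma>)" using a d by simp
        hence "Vm * 1 \<le> Vm * (4 * x / (1 - \<gamma>))" by (rule mult_left_mono[OF _ Vm_nn])
        also have "Vm * (4 * x / (1 - \<gamma>)) = 4 * Vm / (1 - \<gamma>) * x" by simp
        finally show ?thesis by simp
      qed
      show "eta r \<gamma> s0 Tstar \<pi>h \<ge> (SUP \<pi>\<in>PP. eta r \<gamma> s0 Tstar \<pi>
                   - 6 * Vmax r \<gamma> * eps_rho \<gamma> s0 Tstar TT \<pi> / (1 - \<gamma>)^2
                   - Vmax r \<gamma> * eps_mu \<gamma> s0 \<zeta> \<mu>h Tstar \<pi> / (1 - \<gamma>))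
                - eps_V r \<gamma> s0 \<zeta> \<mu>h \<mu> Tstar G Th \<pi>h / (1 - \<gamma>)
                - 4 * Vmax r \<gamma> / (1 - \<gamma>)
                    * sqrt (\<zeta> * ln (2 * real (card G) * real (card TT) * real (card PP) / \<delta>) / real n)
                - 2 * \<zeta> * Vmax r \<gamma> * TV \<mu>h (sa_marg \<mu>) / (1 - \<gamma>)"
        using SUP_le t1 t2 t3 eta_nn[of Tstar \<pi>h] unfolding x_def \<iota>_def by linarith
    qed
    hence "S = UNIV" by auto
    thus ?thesis unfolding S_def[symmetric] using d0 by simp
  next
    case False
    hence Vp: "0 < Vm" and xs: "4 * x < 1 - \<gamma>" using Vm_nn by auto
    have x4: "x \<le> 1/4" using xs g0 by simp
    define \<sigma>2 where "\<sigma>2 = \<zeta> * Vm^2 * (1 + \<zeta> * TV \<mu>h \<nu> / 2)"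
    define b where "b = 2 * \<zeta> * Vm"
    define dev where "dev = sqrt (2 * \<sigma>2 * \<iota> / n) + 2 * b * \<iota> / (3 * n)"
    have s: "0 < \<sigma>2" using z0 Vp TVn unfolding \<sigma>2_def
      by (intro mult_pos_pos) (auto intro: add_pos_nonneg)
    have bp: "0 < b" using z0 Vp by (simp add: b_def)
    have dev0: "0 \<le> dev" unfolding dev_def using s bp i0 n0 by simp
    have ch: "\<iota> \<le> real n * dev^2 / (2 * (\<sigma>2 + b * dev / 3))"
      unfolding dev_def by (rule dev_choice[OF s bp _ n0]) (use i0 in simp)
    have key: "2 * dev \<le> 4 * Vm * x + \<zeta> * Vm * TV \<mu>h \<nu> / 2"
    proof -
      have "2 * dev \<le> 4 * Vm * x + Vm * (\<zeta> * TV \<mu>h \<nu>) / 2"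
        unfolding dev_def \<sigma>2_def b_def x_def
        by (rule dev_alg[OF Vm_nn z0 _ n0 _]) (use i0 x4 TVn z in \<open>auto simp: x_def\<close>)
      thus ?thesis by (simp add: mult_ac)
    qed
    define I where "I = G \<times> TT \<times> PP"
    define Bad where "Bad = (\<lambda>(g, T, \<pi>). {D. length D = n \<and> dev < \<bar>mean D g T \<pi> - EXX g T \<pi>\<bar>})"
    have If: "finite I" unfolding I_def using Gfin TTf PPf by simp
    have sub: "UNIV - S \<subseteq> {D. length D \<noteq> n} \<union> (\<Union>i\<in>I. Bad i)"
    proof
      fix D assume DS: "D \<in> UNIV - S"
      show "D \<in> {D. length D \<noteq> n} \<union> (\<Union>i\<in>I. Bad i)"
      proof (rule ccontr)
        assume "D \<notin> {D. length D \<noteq> n} \<union> (\<Union>i\<in>I. Bad i)"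
        hence len: "length D = n" and nb: "\<forall>i\<in>I. D \<notin> Bad i" by auto
        have good: "\<forall>g\<in>G. \<forall>T\<in>TT. \<forall>\<pi>\<in>PP. \<bar>mean D g T \<pi> - EXX g T \<pi>\<bar> \<le> dev"
        proof (intro ballI)
          fix g T \<pi> assume "g \<in> G" "T \<in> TT" "\<pi> \<in> PP"
          hence "(g, T, \<pi>) \<in> I" by (simp add: I_def)
          hence "D \<notin> Bad (g, T, \<pi>)" using nb by blast
          thus "\<bar>mean D g T \<pi> - EXX g T \<pi>\<bar> \<le> dev" using len by (simp add: Bad_def not_less)
        qed
        have "D \<in> S" unfolding S_def
        proof (intro CollectI allI impI)
          fix \<pi>h Th
          assume c: "\<pi>h \<in> PP \<and> (\<forall>\<pi>\<in>PP. (MAX T\<in>TT. lb r \<gamma> s0 \<zeta> \<mu>h G D T \<pi>)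
                                 \<le> (MAX T\<in>TT. lb r \<gamma> s0 \<zeta> \<mu>h G D T \<pi>h))
           \<and> Th \<in> TT \<and> (\<forall>T\<in>TT. lb r \<gamma> s0 \<zeta> \<mu>h G D T \<pi>h \<le> lb r \<gamma> s0 \<zeta> \<mu>h G D Th \<pi>h)"
          have "eta r \<gamma> s0 Tstar \<pi>h \<ge> (SUP \<pi>\<in>PP. eta r \<gamma> s0 Tstar \<pi>
                   - 6 * Vmax r \<gamma> * eps_rho \<gamma> s0 Tstar TT \<pi> / (1 - \<gamma>)^2
                   - Vmax r \<gamma> * eps_mu \<gamma> s0 \<zeta> \<mu>h Tstar \<pi> / (1 - \<gamma>))
                - eps_V r \<gamma> s0 \<zeta> \<mu>h \<mu> Tstar G Th \<pi>h / (1 - \<gamma>)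
                - 4 * Vmax r \<gamma> / (1 - \<gamma>) * x
                - 2 * \<zeta> * Vmax r \<gamma> * TV \<mu>h (sa_marg \<mu>) / (1 - \<gamma>)"
            using c by (intro det[OF TTf TTne PPf PPne good _ _ _ _ key]) auto
          thus "eta r \<gamma> s0 Tstar \<pi>h \<ge> (SUP \<pi>\<in>PP. eta r \<gamma> s0 Tstar \<pi>
                   - 6 * Vmax r \<gamma> * eps_rho \<gamma> s0 Tstar TT \<pi> / (1 - \<gamma>)^2
                   - Vmax r \<gamma> * eps_mu \<gamma> s0 \<zeta> \<mu>h Tstar \<pi> / (1 - \<gamma>))
                - eps_V r \<gamma> s0 \<zeta> \<mu>h \<mu> Tstar G Th \<pi>h / (1 - \<gamma>)
                - 4 * Vmax r \<gamma> / (1 - \<gamma>)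
                    * sqrt (\<zeta> * ln (2 * real (card G) * real (card TT) * real (card PP) / \<delta>) / real n)
                - 2 * \<zeta> * Vmax r \<gamma> * TV \<mu>h (sa_marg \<mu>) / (1 - \<gamma>)"
            unfolding x_def \<iota>_def .
        qed
        thus False using DS by simp
      qed
    qed
    have p0: "measure_pmf.prob (iid n \<mu>) {D. length D \<noteq> n} = 0"
      using iid_length by (auto simp: measure_pmf_zero_iff)
    have pBad: "measure_pmf.prob (iid n \<mu>) (Bad i) \<le> 2 * exp (- \<iota>)" if "i \<in> I" for i
    proof -
      obtain g T \<pi> where i: "i = (g, T, \<pi>)" by (cases i) auto
      have g: "g \<in> G" using that i by (simp add: I_def)
      have "measure_pmf.prob (iid n \<mu>) (Bad i) \<le> 2 * exp (- (real n * dev^2 / (2 * (\<sigma>2 + b * dev / 3))))"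
        unfolding i Bad_def \<sigma>2_def b_def by (simp only: prod.case) (rule conc_triple[OF g Vp dev0 n0])
      also have "\<dots> \<le> 2 * exp (- \<iota>)" using ch by simp
      finally show ?thesis .
    qed
    have "measure_pmf.prob (iid n \<mu>) (UNIV - S)
        \<le> measure_pmf.prob (iid n \<mu>) ({D. length D \<noteq> n} \<union> (\<Union>i\<in>I. Bad i))"
      by (rule measure_pmf.finite_measure_mono[OF sub]) simp
    also have "\<dots> \<le> measure_pmf.prob (iid n \<mu>) {D. length D \<noteq> n} + measure_pmf.prob (iid n \<mu>) (\<Union>i\<in>I. Bad i)"
      by (rule measure_subadditive) (simp_all add: measure_pmf.emeasure_eq_measure)
    also have "measure_pmf.prob (iid n \<mu>) (\<Union>i\<in>I. Bad i) \<le> (\<Sum>i\<in>I. measure_pmf.prob (iid n \<mu>) (Bad i))"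
      by (rule measure_pmf.finite_measure_subadditive_finite[OF If]) simp
    also have "\<dots> \<le> real (card I) * (2 * exp (- \<iota>))"
      by (rule sum_bounded_above) (rule pBad)
    also have "real (card I) = N" unfolding I_def N_def by (simp add: card_cartesian_product)
    also have "exp (- \<iota>) = \<delta> / (2 * N)"
    proof -
      have "0 < 2 * N / \<delta>" using arg by simp
      hence "exp \<iota> = 2 * N / \<delta>" unfolding \<iota>_def N_def by (simp add: mult.assoc)
      thus ?thesis by (simp add: exp_minus)
    qed
    finally have "measure_pmf.prob (iid n \<mu>) (UNIV - S) \<le> 0 + N * (2 * (\<delta> / (2 * N)))" using p0 by simp
    also have "\<dots> = \<delta>" using N1 by simp
    finally have pc: "measure_pmf.prob (iid n \<mu>) (UNIV - S) \<le> \<delta>" .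
    have "measure_pmf.prob (iid n \<mu>) (UNIV - S) = 1 - measure_pmf.prob (iid n \<mu>) S"
      using measure_pmf.prob_compl[of S "iid n \<mu>"] by simp
    hence "1 - \<delta> \<le> measure_pmf.prob (iid n \<mu>) S" using pc by linarith
    thus ?thesis unfolding S_def .
  qed
qed

end

theorem theorem1:
  fixes r :: "'s \<Rightarrow> 'a \<Rightarrow> real" and \<gamma> \<zeta> \<delta> :: real and s0 :: 's
    and Tstar :: "('s,'a) kernel" and \<mu> :: "('s \<times> 'a \<times> 's) pmf" and \<mu>h :: "('s \<times> 'a) pmf"
    and G :: "('s \<Rightarrow> real) set" and TT :: "('s,'a) kernel set" and PP :: "('s,'a) policy set"
    and n :: nat
  assumes "0 \<le> \<gamma>" and "\<gamma> < 1"
    and "\<forall>s a. 0 \<le> r s a" and "bdd_above (range (case_prod r))"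
    and "0 < \<zeta>" and "0 < \<delta>" and "\<delta> < 1" and "0 < n"
    and "finite G" and "G \<noteq> {}" and "finite TT" and "TT \<noteq> {}" and "finite PP" and "PP \<noteq> {}"
    and "\<forall>g\<in>G. \<forall>s. 0 \<le> g s \<and> g s \<le> Vmax r \<gamma>"
    and "\<forall>s a s'. pmf \<mu> (s, a, s') = pmf (sa_marg \<mu>) (s, a) * pmf (Tstar s a) s'"
  shows "measure_pmf.prob (iid n \<mu>)
     {D. \<forall>\<pi>h Th.
          (\<pi>h \<in> PP \<and> (\<forall>\<pi>\<in>PP. (MAX T\<in>TT. lb r \<gamma> s0 \<zeta> \<mu>h G D T \<pi>)
                                 \<le> (MAX T\<in>TT. lb r \<gamma> s0 \<zeta> \<mu>h G D T \<pi>h))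
           \<and> Th \<in> TT \<and> (\<forall>T\<in>TT. lb r \<gamma> s0 \<zeta> \<mu>h G D T \<pi>h \<le> lb r \<gamma> s0 \<zeta> \<mu>h G D Th \<pi>h))
          \<longrightarrow> eta r \<gamma> s0 Tstar \<pi>h \<ge>
                (SUP \<pi>\<in>PP. eta r \<gamma> s0 Tstar \<pi>
                   - 6 * Vmax r \<gamma> * eps_rho \<gamma> s0 Tstar TT \<pi> / (1 - \<gamma>)^2
                   - Vmax r \<gamma> * eps_mu \<gamma> s0 \<zeta> \<mu>h Tstar \<pi> / (1 - \<gamma>))
                - eps_V r \<gamma> s0 \<zeta> \<mu>h \<mu> Tstar G Th \<pi>h / (1 - \<gamma>)
                - 4 * Vmax r \<gamma> / (1 - \<gamma>)
                    * sqrt (\<zeta> * ln (2 * real (card G) * real (card TT) * real (card PP) / \<delta>) / real n)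
                - 2 * \<zeta> * Vmax r \<gamma> * TV \<mu>h (sa_marg \<mu>) / (1 - \<gamma>)}
   \<ge> 1 - \<delta>"
proof -
  interpret setting r \<gamma> s0 \<zeta> \<mu>h \<mu> Tstar G
    by unfold_locales (use assms in auto)
  show ?thesis by (rule main) (use assms in auto)
qed

end
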